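(* Let $k\ge k_0:=\max\{\lceil d/2\rceil,1\}$, let $x^*$ be an optimizer of $(\mathrm{SOS}_k)$ and $(y^*,z^* )$ an optimizer of $(\mathrm{MOM}_k)$. Suppose $f_k^{sos}=f_k^{mom}$ and there exists an integer $t\in[k_0,k]$ with $\operatorname{rank}M_t[z^*]=\operatorname{rank}M_{t-1}[z^*]$ (flat truncation). Then $x^*$ is a minimizer of $(\mathrm{P})$ and $c^Tx^*=f^{\min}$. (Equivalently: if the semidefinite relaxation algorithm that increases $k$ from $k_0$ until these two conditions hold terminates, its output is the correct optimizer and optimal value of $(\mathrm{P})$.)
   Context: Let $\xi=(\xi_1,\dots,\xi_r)$ and let $[\xi]_d$ be the vector of all monomials in $\xi$ of degree at most $d$, graded/alphabetically ordered, indexed by $\mathbb{N}^r_d=\{\alpha\in\mathbb{N}^r:|\alpha|\le d\}$. Let $A$ be a real $|\mathbb{N}^r_d|\times n$ matrix, $b\in\mathbb{R}^{\mathbb{N}^r_d}$, $c\in\mathbb{R}^n$. Let $X\subseteq\mathbb{R}^n$ be a closed convex set with dual cone $X^*$. Fix $\Gamma>0$, $\mu\in\mathbb{R}^r$, positive definite $\Lambda$, $g(\xi)=\Gamma-(\xi-\mu)^T\Lambda^{-1}(\xi-\mu)$, $U=\{\xi:g(\xi)\ge0\}$. $\mathbb{R}[\xi]_t$: polynomials of degree $\le t$; $\Sigma[\xi]_t$: SOS polynomials in $\mathbb{R}[\xi]_t$; $\mathscr{P}_d(U)=\{p\in\mathbb{R}[\xi]_d:p\ge0\text{ on }U\}$;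 $\mathrm{QM}[g]_{2k}=\Sigma[\xi]_{2k}+g\cdot\Sigma[\xi]_{2k-2}$. For $z\in\mathbb{R}^{\mathbb{N}^r_{2k}}$: $\mathscr{L}_z(\sum p_\alpha\xi^\alpha)=\sum p_\alpha z_\alpha$; moment matrix $M_t[z]$ ($t\le k$) with $\mathrm{vec}(a_1)^TM_t[z]\mathrm{vec}(a_2)=\mathscr{L}_z(a_1a_2)$ for $a_1,a_2\in\mathbb{R}[\xi]_t$; localizing matrix $L_g^{(k)}[z]$ with $\mathrm{vec}(a_1)^TL_g^{(k)}[z]\mathrm{vec}(a_2)=\mathscr{L}_z(ga_1a_2)$ for $a_1,a_2\in\mathbb{R}[\xi]_{k-1}$; $\mathscr{S}[g]_{2k}=\{z: M_k[z]\succeq0, L_g^{(k)}[z]\succeq0\}$; $z|_d=(z_\alpha)_{|\alpha|\le d}$. $(\mathrm{P})$: $f^{\min}=\min_{x\in X}c^Tx$ s.t. $(Ax+b)^T[\xi]_d\in\mathscr{P}_d(U)$. $(\mathrm{SOS}_k)$: $f_k^{sos}=\min_{x\in X}c^Tx$ s.t. $(Ax+b)^T[\xi]_d\in\mathrm{QM}[g]_{2k}\cap\mathbb{R}[\xi]_d$. $(\mathrm{MOM}_k)$: $f_k^{mom}=\max -b^Ty$ s.t. $c-A^Ty\in X^*$, $y=z|_d$, $z\in\mathscr{S}[g]_{2k}$. *)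

theory Defs
  imports "HOL-Analysis.Analysis"
begin

text \<open>Exponent vectors alpha in N^r are functions 'r => nat ('r a finite index type,
  r = CARD('r)). A polynomial is its coefficient function (('r => nat) => real).\<close>

definition mdeg :: "('r::finite \<Rightarrow> nat) \<Rightarrow> nat" where
  "mdeg \<alpha> = (\<Sum>i\<in>UNIV. \<alpha> i)"

definition mons :: "nat \<Rightarrow> ('r::finite \<Rightarrow> nat) set" where
  "mons t = {\<alpha>. mdeg \<alpha> \<le> t}"

definition deg_le :: "nat \<Rightarrow> (('r::finite \<Rightarrow> nat) \<Rightarrow> real) \<Rightarrow> bool" where
  "deg_le t p \<longleftrightarrow> (\<forall>\<alpha>. t < mdeg \<alpha> \<longrightarrow> p \<alpha> = 0)"

definition monom_eval :: "('r::finite \<Rightarrow> nat) \<Rightarrow> real^'r \<Rightarrow> real" where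
  "monom_eval \<alpha> \<xi> = (\<Prod>i\<in>UNIV. (\<xi> $ i) ^ \<alpha> i)"

definition peval :: "nat \<Rightarrow> (('r::finite \<Rightarrow> nat) \<Rightarrow> real) \<Rightarrow> real^'r \<Rightarrow> real" where
  "peval t p \<xi> = (\<Sum>\<alpha>\<in>mons t. p \<alpha> * monom_eval \<alpha> \<xi>)"

definition pmul :: "(('r::finite \<Rightarrow> nat) \<Rightarrow> real) \<Rightarrow> (('r \<Rightarrow> nat) \<Rightarrow> real) \<Rightarrow> ('r \<Rightarrow> nat) \<Rightarrow> real" where
  "pmul p q \<alpha> = (\<Sum>\<beta>\<in>{\<beta>. \<forall>i. \<beta> i \<le> \<alpha> i}. p \<beta> * q (\<lambda>i. \<alpha> i - \<beta> i))"

definition pconst :: "real \<Rightarrow> ('r::finite \<Rightarrow> nat) \<Rightarrow> real" where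
  "pconst a \<alpha> = (if \<alpha> = (\<lambda>_. 0) then a else 0)"

definition pvar :: "'r::finite \<Rightarrow> ('r \<Rightarrow> nat) \<Rightarrow> real" where
  "pvar i \<alpha> = (if \<alpha> = (\<lambda>j. if j = i then 1 else 0) then 1 else 0)"

definition pos_def_mat :: "real^'r^'r \<Rightarrow> bool" where
  "pos_def_mat L \<longleftrightarrow> transpose L = L \<and> (\<forall>v. v \<noteq> 0 \<longrightarrow> 0 < v \<bullet> (L *v v))"

definition gfun :: "real \<Rightarrow> real^'r \<Rightarrow> real^'r^'r \<Rightarrow> real^'r \<Rightarrow> real" where
  "gfun Gam mu Lam \<xi> = Gam - (\<xi> - mu) \<bullet> (matrix_inv Lam *v (\<xi> - mu))"

definition gpoly :: "real \<Rightarrow> real^'r \<Rightarrow> real^'r^'r \<Rightarrow> ('r::finite \<Rightarrow> nat) \<Rightarrow> real" where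
  "gpoly Gam mu Lam \<alpha> = pconst Gam \<alpha> -
     (\<Sum>i\<in>UNIV. \<Sum>j\<in>UNIV. (matrix_inv Lam $ i $ j) *
        pmul (\<lambda>\<beta>. pvar i \<beta> - pconst (mu $ i) \<beta>) (\<lambda>\<beta>. pvar j \<beta> - pconst (mu $ j) \<beta>) \<alpha>)"

definition Uset :: "real \<Rightarrow> real^'r \<Rightarrow> real^'r^'r \<Rightarrow> (real^'r) set" where
  "Uset Gam mu Lam = {\<xi>. 0 \<le> gfun Gam mu Lam \<xi>}"

definition sos :: "nat \<Rightarrow> (('r::finite \<Rightarrow> nat) \<Rightarrow> real) \<Rightarrow> bool" where
  "sos t s \<longleftrightarrow> (\<exists>qs. (\<forall>q\<in>set qs. deg_le t q) \<and> s = (\<lambda>\<alpha>. \<Sum>q\<leftarrow>qs. pmul q q \<alpha>))"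

definition QM :: "real \<Rightarrow> real^'r \<Rightarrow> real^'r^'r \<Rightarrow> nat \<Rightarrow> (('r::finite \<Rightarrow> nat) \<Rightarrow> real) \<Rightarrow> bool" where
  "QM Gam mu Lam k p \<longleftrightarrow> (\<exists>s0 s1. sos k s0 \<and> sos (k - 1) s1 \<and>
      p = (\<lambda>\<alpha>. s0 \<alpha> + pmul (gpoly Gam mu Lam) s1 \<alpha>))"

definition Pnonneg :: "real \<Rightarrow> real^'r \<Rightarrow> real^'r^'r \<Rightarrow> nat \<Rightarrow> (('r::finite \<Rightarrow> nat) \<Rightarrow> real) \<Rightarrow> bool" where
  "Pnonneg Gam mu Lam d p \<longleftrightarrow> deg_le d p \<and> (\<forall>\<xi>\<in>Uset Gam mu Lam. 0 \<le> peval d p \<xi>)"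

definition psd_on :: "'a set \<Rightarrow> ('a \<Rightarrow> 'a \<Rightarrow> real) \<Rightarrow> bool" where
  "psd_on I M \<longleftrightarrow> (\<forall>i\<in>I. \<forall>j\<in>I. M i j = M j i) \<and>
     (\<forall>v. 0 \<le> (\<Sum>i\<in>I. \<Sum>j\<in>I. v i * M i j * v j))"

definition cols_indep :: "'a set \<Rightarrow> ('a \<Rightarrow> 'a \<Rightarrow> real) \<Rightarrow> 'a set \<Rightarrow> bool" where
  "cols_indep I M J \<longleftrightarrow>
     (\<forall>c. (\<forall>i\<in>I. (\<Sum>j\<in>J. c j * M i j) = 0) \<longrightarrow> (\<forall>j\<in>J. c j = 0))"

definition rank_on :: "'a set \<Rightarrow> ('a \<Rightarrow> 'a \<Rightarrow> real) \<Rightarrow> nat" where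
  "rank_on I M = Max {card J | J. J \<subseteq> I \<and> cols_indep I M J}"

definition moment_mat :: "(('r::finite \<Rightarrow> nat) \<Rightarrow> real) \<Rightarrow> ('r \<Rightarrow> nat) \<Rightarrow> ('r \<Rightarrow> nat) \<Rightarrow> real" where
  "moment_mat z \<beta> \<gamma> = z (\<lambda>i. \<beta> i + \<gamma> i)"

definition loc_mat :: "real \<Rightarrow> real^'r \<Rightarrow> real^'r^'r \<Rightarrow> (('r::finite \<Rightarrow> nat) \<Rightarrow> real) \<Rightarrow> ('r \<Rightarrow> nat) \<Rightarrow> ('r \<Rightarrow> nat) \<Rightarrow> real" where
  "loc_mat Gam mu Lam z \<beta> \<gamma> = (\<Sum>\<alpha>\<in>mons 2. gpoly Gam mu Lam \<alpha> * z (\<lambda>i. \<alpha> i + \<beta> i + \<gamma> i))"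

definition Sg :: "real \<Rightarrow> real^'r \<Rightarrow> real^'r^'r \<Rightarrow> nat \<Rightarrow> (('r::finite \<Rightarrow> nat) \<Rightarrow> real) \<Rightarrow> bool" where
  "Sg Gam mu Lam k z \<longleftrightarrow> deg_le (2 * k) z \<and>
     psd_on (mons k) (moment_mat z) \<and> psd_on (mons (k - 1)) (loc_mat Gam mu Lam z)"

text \<open>coefficient vector of (Ax+b)^T [xi]_d\<close>
definition affpoly :: "nat \<Rightarrow> (('r::finite \<Rightarrow> nat) \<Rightarrow> real^'n) \<Rightarrow> (('r \<Rightarrow> nat) \<Rightarrow> real) \<Rightarrow> real^'n \<Rightarrow> ('r \<Rightarrow> nat) \<Rightarrow> real" where
  "affpoly d A b x \<alpha> = (if mdeg \<alpha> \<le> d then A \<alpha> \<bullet> x + b \<alpha> else 0)"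

definition dual_cone :: "(real^'n) set \<Rightarrow> (real^'n) set" where
  "dual_cone X = {y. \<forall>x\<in>X. 0 \<le> y \<bullet> x}"

definition P_feas where
  "P_feas d A b X Gam mu Lam x \<longleftrightarrow> x \<in> X \<and> Pnonneg Gam mu Lam d (affpoly d A b x)"

definition f_min where
  "f_min d A b c X Gam mu Lam = (INF x\<in>{x. P_feas d A b X Gam mu Lam x}. c \<bullet> x)"

definition P_minimizer where
  "P_minimizer d A b c X Gam mu Lam x \<longleftrightarrow> P_feas d A b X Gam mu Lam x \<and>
     (\<forall>x'. P_feas d A b X Gam mu Lam x' \<longrightarrow> c \<bullet> x \<le> c \<bullet> x')"

definition SOS_feas where
  "SOS_feas k d A b X Gam mu Lam x \<longleftrightarrow> x \<in> X \<and> QM Gam mu Lam k (affpoly d A b x)"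

definition f_sos where
  "f_sos k d A b c X Gam mu Lam = (INF x\<in>{x. SOS_feas k d A b X Gam mu Lam x}. c \<bullet> x)"

definition SOS_optimizer where
  "SOS_optimizer k d A b c X Gam mu Lam x \<longleftrightarrow> SOS_feas k d A b X Gam mu Lam x \<and>
     (\<forall>x'. SOS_feas k d A b X Gam mu Lam x' \<longrightarrow> c \<bullet> x \<le> c \<bullet> x')"

definition trunc :: "nat \<Rightarrow> (('r::finite \<Rightarrow> nat) \<Rightarrow> real) \<Rightarrow> ('r \<Rightarrow> nat) \<Rightarrow> real" where
  "trunc d z \<alpha> = (if mdeg \<alpha> \<le> d then z \<alpha> else 0)"

definition MOM_feas where
  "MOM_feas k d (A :: ('r::finite \<Rightarrow> nat) \<Rightarrow> real^'n) c X Gam mu Lam y z \<longleftrightarrow>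
     c - (\<Sum>\<alpha>\<in>mons d. y \<alpha> *\<^sub>R A \<alpha>) \<in> dual_cone X \<and> y = trunc d z \<and> Sg Gam mu Lam k z"

definition mom_obj :: "nat \<Rightarrow> (('r::finite \<Rightarrow> nat) \<Rightarrow> real) \<Rightarrow> (('r \<Rightarrow> nat) \<Rightarrow> real) \<Rightarrow> real" where
  "mom_obj d b y = - (\<Sum>\<alpha>\<in>mons d. b \<alpha> * y \<alpha>)"

definition f_mom where
  "f_mom k d A b c X Gam mu Lam =
     (SUP yz\<in>{(y, z). MOM_feas k d A c X Gam mu Lam y z}. mom_obj d b (fst yz))"

definition MOM_optimizer where
  "MOM_optimizer k d A b c X Gam mu Lam y z \<longleftrightarrow> MOM_feas k d A c X Gam mu Lam y z \<and>
     (\<forall>y' z'. MOM_feas k d A c X Gam mu Lam y' z' \<longrightarrow> mom_obj d b y' \<le> mom_obj d b y)"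

end

theory Submission
  imports Defs "HOL-Library.Function_Algebras" "HOL-Computational_Algebra.Fundamental_Theorem_Algebra"
begin


lemma sum_fun_apply: "(\<Sum>k\<in>K. f k) l = (\<Sum>k\<in>K. f k l)"
  by (induction K rule: infinite_finite_induct) auto

definition VJ :: "'a set \<Rightarrow> ('a \<Rightarrow> real) set" where
  "VJ J = {x. \<forall>l. l \<notin> J \<longrightarrow> x l = 0}"

definition ip :: "'a set \<Rightarrow> ('a \<Rightarrow> 'a \<Rightarrow> real) \<Rightarrow> ('a \<Rightarrow> real) \<Rightarrow> ('a \<Rightarrow> real) \<Rightarrow> real" where
  "ip J G x y = (\<Sum>j\<in>J. \<Sum>l\<in>J. x j * G j l * y l)"

definition scl :: "real \<Rightarrow> ('a \<Rightarrow> real) \<Rightarrow> ('a \<Rightarrow> real)" where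
  "scl c x = (\<lambda>l. c * x l)"

definition lin :: "(('a \<Rightarrow> real) \<Rightarrow> ('a \<Rightarrow> real)) \<Rightarrow> bool" where
  "lin T \<longleftrightarrow> (\<forall>x y. T (x + y) = T x + T y) \<and> (\<forall>c x. T (scl c x) = scl c (T x))"

lemma scl_apply[simp]: "scl c x l = c * x l" by (simp add: scl_def)
lemma scl_0[simp]: "scl 0 x = 0" "scl c 0 = 0" "scl 1 x = x" by (auto simp: scl_def fun_eq_iff)
lemma scl_add: "scl c (x + y) = scl c x + scl c y" "scl (a + b) x = scl a x + scl b x"
  by (auto simp: scl_def fun_eq_iff algebra_simps)
lemma scl_scl: "scl a (scl b x) = scl (a * b) x" by (auto simp: scl_def fun_eq_iff)
lemma scl_sum: "scl c (\<Sum>k\<in>K. f k) = (\<Sum>k\<in>K. scl c (f k))"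
  by (auto simp: fun_eq_iff sum_fun_apply sum_distrib_left)

lemma lin_add: "lin T \<Longrightarrow> T (x + y) = T x + T y" by (simp add: lin_def)
lemma lin_scl: "lin T \<Longrightarrow> T (scl c x) = scl c (T x)" by (simp add: lin_def)
lemma lin_0: "lin T \<Longrightarrow> T 0 = 0"
  using lin_scl[of T 0 0] by simp
lemma lin_minus: "lin T \<Longrightarrow> T (x - y) = T x - T y"
proof -
  assume l: "lin T"
  have e: "x - y = x + scl (-1) y" by (auto simp: fun_eq_iff)
  have "T (x - y) = T x + scl (-1) (T y)" unfolding e lin_add[OF l] lin_scl[OF l] ..
  then show ?thesis by (auto simp: fun_eq_iff)
qed
lemma lin_sum: "lin T \<Longrightarrow> T (\<Sum>k\<in>K. f k) = (\<Sum>k\<in>K. T (f k))"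
  by (induction K rule: infinite_finite_induct) (auto simp: lin_0 lin_add)
lemma lin_lsum: "lin T \<Longrightarrow> T (\<lambda>l. \<Sum>k\<in>K. c k * f k l) = (\<lambda>l. \<Sum>k\<in>K. c k * T (f k) l)"
proof -
  assume l: "lin T"
  have e: "(\<lambda>l. \<Sum>k\<in>K. c k * f k l) = (\<Sum>k\<in>K. scl (c k) (f k))"
    by (auto simp: fun_eq_iff sum_fun_apply)
  show ?thesis unfolding e lin_sum[OF l] lin_scl[OF l] by (auto simp: fun_eq_iff sum_fun_apply)
qed
lemma lin_funpow: "lin T \<Longrightarrow> lin (T ^^ n)"
  by (induction n) (auto simp: lin_def)
lemma lin_id: "lin (\<lambda>x. x)" by (simp add: lin_def)

lemma VJ_add: "x \<in> VJ J \<Longrightarrow> y \<in> VJ J \<Longrightarrow> x + y \<in> VJ J" by (simp add: VJ_def)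
lemma VJ_diff: "x \<in> VJ J \<Longrightarrow> y \<in> VJ J \<Longrightarrow> x - y \<in> VJ J" by (simp add: VJ_def)
lemma VJ_scl: "x \<in> VJ J \<Longrightarrow> scl c x \<in> VJ J" by (simp add: VJ_def)
lemma VJ_0: "0 \<in> VJ J" by (simp add: VJ_def)
lemma VJ_sum: "(\<And>k. k \<in> K \<Longrightarrow> f k \<in> VJ J) \<Longrightarrow> (\<Sum>k\<in>K. f k) \<in> VJ J"
  by (simp add: VJ_def sum_fun_apply)

lemma ip_add_left: "ip J G (x + y) z = ip J G x z + ip J G y z"
  by (simp add: ip_def algebra_simps sum.distrib)
lemma ip_add_right: "ip J G z (x + y) = ip J G z x + ip J G z y"
  by (simp add: ip_def algebra_simps sum.distrib)
lemma ip_diff_left: "ip J G (x - y) z = ip J G x z - ip J G y z"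
  by (simp add: ip_def algebra_simps sum_subtractf)
lemma ip_diff_right: "ip J G z (x - y) = ip J G z x - ip J G z y"
  by (simp add: ip_def algebra_simps sum_subtractf)
lemma ip_scl_left: "ip J G (scl c x) z = c * ip J G x z"
  by (simp add: ip_def sum_distrib_left algebra_simps)
lemma ip_scl_right: "ip J G z (scl c x) = c * ip J G z x"
  by (simp add: ip_def sum_distrib_left algebra_simps)
lemma ip_zero[simp]: "ip J G 0 z = 0" "ip J G z 0 = 0" by (simp_all add: ip_def)
lemma ip_sum_left: "ip J G (\<Sum>k\<in>K. f k) z = (\<Sum>k\<in>K. ip J G (f k) z)"
proof (induction K rule: infinite_finite_induct)
  case (insert x F)
  then show ?case by (simp del: plus_fun_apply add: ip_add_left)
qed (simp_all add: ip_def)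
lemma ip_sum_right: "ip J G z (\<Sum>k\<in>K. f k) = (\<Sum>k\<in>K. ip J G z (f k))"
proof (induction K rule: infinite_finite_induct)
  case (insert x F)
  then show ?case by (simp del: plus_fun_apply add: ip_add_right)
qed (simp_all add: ip_def)

definition opev :: "(('a \<Rightarrow> real) \<Rightarrow> ('a \<Rightarrow> real)) \<Rightarrow> real poly \<Rightarrow> ('a \<Rightarrow> real) \<Rightarrow> ('a \<Rightarrow> real)" where
  "opev T p x = (\<lambda>l. \<Sum>i\<le>degree p. coeff p i * (T ^^ i) x l)"

lemma opev_bound: "degree p \<le> n \<Longrightarrow> opev T p x = (\<lambda>l. \<Sum>i\<le>n. coeff p i * (T ^^ i) x l)"
  unfolding opev_def
  by (rule ext, rule sum.mono_neutral_left) (auto simp: coeff_eq_0)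

lemma opev_pCons: assumes l: "lin T"
  shows "opev T (pCons a p) x = scl a x + T (opev T p x)"
proof -
  have "opev T (pCons a p) x = (\<lambda>l. \<Sum>i\<le>Suc (degree p). coeff (pCons a p) i * (T ^^ i) x l)"
    by (rule opev_bound) (simp add: degree_pCons_le)
  also have "\<dots> = (\<lambda>l. a * x l + (\<Sum>i\<le>degree p. coeff p i * (T ^^ Suc i) x l))"
    by (simp only: sum.atMost_Suc_shift coeff_pCons_0 coeff_pCons_Suc) simp
  also have "\<dots> = scl a x + T (opev T p x)"
    unfolding opev_def lin_lsum[OF l] by (auto simp: fun_eq_iff)
  finally show ?thesis .
qed

lemma opev_0[simp]: "opev T 0 x = 0" by (simp add: opev_def fun_eq_iff)

lemma opev_add: "opev T (p + q) x = opev T p x + opev T q x"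
proof -
  let ?n = "max (degree p) (degree q)"
  have "degree (p + q) \<le> ?n" by (rule degree_add_le) auto
  then show ?thesis
    by (simp add: opev_bound[of _ ?n] fun_eq_iff algebra_simps sum.distrib)
qed

lemma opev_smult: "opev T (smult c p) x = scl c (opev T p x)"
proof -
  have "degree (smult c p) \<le> degree p" by simp
  then show ?thesis
    by (simp add: opev_bound[of _ "degree p"] opev_def fun_eq_iff sum_distrib_left algebra_simps)
qed

lemma opev_const: "opev T [:c:] x = scl c x"
  by (simp add: opev_def fun_eq_iff)

lemma opev_mult: assumes l: "lin T" shows "opev T (p * q) x = opev T p (opev T q x)"
proof (induction p rule: pCons_induct)
  case 0
  then show ?case by (simp add: opev_def fun_eq_iff)
next
  case (pCons a p)
  have "opev T (pCons a p * q) x = opev T (smult a q + pCons 0 (p * q)) x" by simp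
  also have "\<dots> = scl a (opev T q x) + T (opev T p (opev T q x))"
    by (simp add: opev_add opev_smult opev_pCons[OF l] pCons.IH)
  also have "\<dots> = opev T (pCons a p) (opev T q x)" by (simp add: opev_pCons[OF l])
  finally show ?case .
qed

lemma lin_opev: assumes l: "lin T" shows "lin (opev T p)"
  unfolding lin_def opev_def
  using lin_add[OF lin_funpow[OF l]] lin_scl[OF lin_funpow[OF l]]
  by (auto simp: fun_eq_iff sum.distrib algebra_simps sum_distrib_left)

lemma opev_eig: assumes l: "lin T" and e: "T y = scl \<mu> y"
  shows "opev T p y = scl (poly p \<mu>) y"
proof (induction p rule: pCons_induct)
  case 0 then show ?case by simp
next
  case (pCons a p)
  have "opev T (pCons a p) y = scl a y + T (scl (poly p \<mu>) y)" by (simp only: opev_pCons[OF l] pCons.IH)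
  also have "\<dots> = scl a y + scl (poly p \<mu>) (scl \<mu> y)" by (simp add: lin_scl[OF l] e)
  finally show ?case by (simp add: fun_eq_iff algebra_simps)
qed

lemma funpow_comm: assumes "\<And>x. S (T x) = T (S x)" shows "S ((T ^^ n) x) = (T ^^ n) (S x)"
  by (induction n) (auto simp: assms)

lemma opev_comm: assumes lS: "lin S" and c: "\<And>x. S (T x) = T (S x)"
  shows "S (opev T p x) = opev T p (S x)"
  unfolding opev_def lin_lsum[OF lS] using funpow_comm[of S T, OF c] by simp

lemma opev_VJ: assumes "\<And>x. x \<in> VJ J \<Longrightarrow> T x \<in> VJ J" and "x \<in> VJ J"
  shows "opev T p x \<in> VJ J"
proof -
  have "(T ^^ i) x \<in> VJ J" for i by (induction i) (auto simp: assms)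
  then show ?thesis by (auto simp: opev_def VJ_def)
qed

definition cev :: "real poly \<Rightarrow> complex \<Rightarrow> complex" where
  "cev p z = (\<Sum>i\<le>degree p. complex_of_real (coeff p i) * z ^ i)"

lemma cev_bound: "degree p \<le> n \<Longrightarrow> cev p z = (\<Sum>i\<le>n. complex_of_real (coeff p i) * z ^ i)"
  unfolding cev_def by (rule sum.mono_neutral_left) (auto simp: coeff_eq_0)

lemma cev_add: "cev (p + q) z = cev p z + cev q z"
proof -
  let ?n = "max (degree p) (degree q)"
  have "degree (p + q) \<le> ?n" by (rule degree_add_le) auto
  then show ?thesis by (simp add: cev_bound[of _ ?n] algebra_simps sum.distrib)
qed

lemma cev_smult: "cev (smult c p) z = of_real c * cev p z"
  by (simp add: cev_bound[of "smult c p" "degree p"] cev_def sum_distrib_left algebra_simps)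

lemma cev_pCons: "cev (pCons a p) z = of_real a + z * cev p z"
proof -
  have "cev (pCons a p) z = (\<Sum>i\<le>Suc (degree p). complex_of_real (coeff (pCons a p) i) * z ^ i)"
    by (rule cev_bound) (simp add: degree_pCons_le)
  also have "\<dots> = of_real a + (\<Sum>i\<le>degree p. complex_of_real (coeff p i) * z ^ Suc i)"
    by (simp only: sum.atMost_Suc_shift coeff_pCons_0 coeff_pCons_Suc) simp
  also have "\<dots> = of_real a + z * cev p z"
    by (simp add: cev_def sum_distrib_left algebra_simps)
  finally show ?thesis .
qed

lemma cev_0[simp]: "cev 0 z = 0" by (simp add: cev_def)

lemma cev_mult: "cev (p * q) z = cev p z * cev q z"
proof (induction p rule: pCons_induct)
  case (pCons a p)
  have "cev (pCons a p * q) z = cev (smult a q + pCons 0 (p * q)) z" by simp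
  also have "\<dots> = cev (pCons a p) z * cev q z"
    by (simp only: cev_add cev_smult cev_pCons pCons.IH) (simp add: algebra_simps)
  finally show ?case .
qed simp

lemma cev_real: "cev p (complex_of_real x) = complex_of_real (poly p x)"
  by (simp add: cev_def poly_altdef)

lemma cev_root: assumes "degree p > 0" shows "\<exists>z. cev p z = 0"
proof -
  let ?P = "map_poly complex_of_real p"
  have dP: "degree ?P = degree p" by (rule degree_map_poly) auto
  have "\<not> constant (poly ?P)" using assms dP by (simp add: constant_degree)
  then obtain z where "poly ?P z = 0" using fundamental_theorem_of_algebra by blast
  moreover have "poly ?P z = cev p z"
    by (simp add: poly_altdef cev_def dP coeff_map_poly)
  ultimately show ?thesis by auto
qed


lemma opev_sum: "opev T (\<Sum>k\<in>K. p k) x = (\<Sum>k\<in>K. opev T (p k) x)"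
proof (induction K rule: infinite_finite_induct)
  case (insert a F)
  then show ?case by (simp del: plus_fun_apply add: opev_add)
qed (simp_all add: opev_def fun_eq_iff)

lemma opev_diff: "opev T (p - q) x = opev T p x - opev T q x"
proof -
  have "p - q = p + smult (-1) q" by simp
  then show ?thesis by (simp only: opev_add opev_smult) (auto simp: fun_eq_iff)
qed

lemma opev_one: "opev T 1 x = x"
  using opev_const[of T 1 x] by (simp add: one_pCons)

lemma opev_lin1: "lin T \<Longrightarrow> opev T [:- c, 1:] y = T y - scl c y"
  by (simp add: opev_pCons opev_const fun_eq_iff)

lemma opev_quad: "lin T \<Longrightarrow> opev T [:c, b, 1:] y = scl c y + scl b (T y) + T (T y)"
  by (simp add: opev_pCons opev_const lin_add lin_scl fun_eq_iff)

lemma ip_zero'[simp]: "ip J G (\<lambda>_. 0) z = 0" "ip J G z (\<lambda>_. 0) = 0" by (simp_all add: ip_def)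

lemma dep_lemma:
  assumes "finite J"
  shows "finite I \<Longrightarrow> card J < card I \<Longrightarrow>
    \<exists>c. (\<exists>i\<in>I. c i \<noteq> 0) \<and> (\<forall>j\<in>J. (\<Sum>i\<in>I. c i * f i j) = (0::real))"
  using assms
proof (induction J arbitrary: I f rule: finite_induct)
  case empty
  then have "I \<noteq> {}" by auto
  then show ?case by (intro exI[of _ "\<lambda>_. 1"]) auto
next
  case (insert x J)
  show ?case
  proof (cases "\<forall>i\<in>I. f i x = 0")
    case True
    have "card J < card I" using insert by simp
    then obtain c where c1: "\<exists>i\<in>I. c i \<noteq> 0" and c2: "\<forall>j\<in>J. (\<Sum>i\<in>I. c i * f i j) = 0"
      using insert.IH[OF insert.prems(1)] by blast
    show ?thesis using True c1 c2 by (intro exI[of _ c]) auto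
  next
    case False
    then obtain i0 where i0: "i0 \<in> I" "f i0 x \<noteq> 0" by auto
    define I' where "I' = I - {i0}"
    have fI': "finite I'" using insert.prems by (simp add: I'_def)
    have cI': "card J < card I'" using insert.prems i0 insert.hyps by (simp add: I'_def)
    define g where "g = (\<lambda>i j. f i j - (f i x / f i0 x) * f i0 j)"
    obtain c' where c1: "\<exists>i\<in>I'. c' i \<noteq> 0" and c2: "\<forall>j\<in>J. (\<Sum>i\<in>I'. c' i * g i j) = 0"
      using insert.IH[OF fI' cI', of g] by blast
    define S where "S = (\<lambda>j. \<Sum>i\<in>I'. c' i * f i j)"
    define c where "c = (\<lambda>i. if i = i0 then - S x / f i0 x else c' i)"
    have sumI: "(\<Sum>i\<in>I. c i * f i j) = c i0 * f i0 j + S j" for j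
    proof -
      have "(\<Sum>i\<in>I. c i * f i j) = c i0 * f i0 j + (\<Sum>i\<in>I'. c i * f i j)"
        unfolding I'_def using sum.remove[OF insert.prems(1) i0(1)] by simp
      also have "(\<Sum>i\<in>I'. c i * f i j) = S j" unfolding S_def c_def I'_def by (intro sum.cong) auto
      finally show ?thesis .
    qed
    show ?thesis
    proof (intro exI[of _ c] conjI ballI)
      show "\<exists>i\<in>I. c i \<noteq> 0" using c1 by (auto simp: c_def I'_def)
    next
      fix j assume j: "j \<in> insert x J"
      show "(\<Sum>i\<in>I. c i * f i j) = 0"
      proof (cases "j = x")
        case True
        have "(\<Sum>i\<in>I. c i * f i j) = c i0 * f i0 x + S x" using sumI True by simp
        then show ?thesis using i0 by (simp add: c_def)
      next
        case False
        then have jJ: "j \<in> J" using j by auto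
        have "0 = (\<Sum>i\<in>I'. c' i * g i j)" using c2 jJ by simp
        also have "\<dots> = S j - S x / f i0 x * f i0 j"
          unfolding g_def S_def by (simp add: algebra_simps sum_subtractf sum_distrib_left sum_divide_distrib)
        finally have "S j = S x / f i0 x * f i0 j" by simp
        then show ?thesis using i0 sumI[of j] by (simp add: c_def)
      qed
    qed
  qed
qed

lemma choice3: "\<forall>x\<in>A. \<exists>a b c. P x a b c \<Longrightarrow> \<exists>f g h. \<forall>x\<in>A. P x (f x) (g x) (h x)"
proof -
  assume "\<forall>x\<in>A. \<exists>a b c. P x a b c"
  then have "\<forall>x\<in>A. \<exists>t. P x (fst t) (fst (snd t)) (snd (snd t))"
  proof (intro ballI)
    fix x assume "\<forall>x\<in>A. \<exists>a b c. P x a b c" "x \<in> A"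
    then obtain a b c where "P x a b c" by blast
    then show "\<exists>t. P x (fst t) (fst (snd t)) (snd (snd t))" by (intro exI[of _ "(a,b,c)"]) simp
  qed
  from bchoice[OF this] obtain F where F: "\<forall>x\<in>A. P x (fst (F x)) (fst (snd (F x))) (snd (snd (F x)))"
    by blast
  show ?thesis
    by (rule exI[of _ "\<lambda>x. fst (F x)"], rule exI[of _ "\<lambda>x. fst (snd (F x))"],
        rule exI[of _ "\<lambda>x. snd (snd (F x))"]) (use F in simp)
qed

locale spd =
  fixes J :: "'a set" and G :: "'a \<Rightarrow> 'a \<Rightarrow> real"
  assumes finJ: "finite J"
    and Gsym: "\<And>j l. j \<in> J \<Longrightarrow> l \<in> J \<Longrightarrow> G j l = G l j"
    and Gpos: "\<And>x. x \<in> VJ J \<Longrightarrow> x \<noteq> 0 \<Longrightarrow> 0 < ip J G x x"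
begin

lemma ip_sym: "ip J G x y = ip J G y x"
proof -
  have "ip J G x y = (\<Sum>j\<in>J. \<Sum>l\<in>J. y l * G l j * x j)"
    unfolding ip_def by (intro sum.cong refl) (simp add: Gsym)
  also have "\<dots> = ip J G y x" unfolding ip_def by (rule sum.swap)
  finally show ?thesis .
qed

lemma ip_nonneg: "x \<in> VJ J \<Longrightarrow> 0 \<le> ip J G x x"
  by (cases "x = 0") (auto dest: Gpos intro: less_imp_le)

lemma ip_eq0: "x \<in> VJ J \<Longrightarrow> ip J G x x \<le> 0 \<Longrightarrow> x = 0"
  using Gpos by force

definition opJ :: "(('a \<Rightarrow> real) \<Rightarrow> ('a \<Rightarrow> real)) \<Rightarrow> bool" where
  "opJ T \<longleftrightarrow> lin T \<and> (\<forall>x\<in>VJ J. T x \<in> VJ J) \<and>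
     (\<forall>x\<in>VJ J. \<forall>y\<in>VJ J. ip J G (T x) y = ip J G x (T y))"

lemma S1:
  assumes T: "opJ T" and y: "y \<in> VJ J"
    and h: "T (T y - scl c y) = scl c (T y - scl c y)"
  shows "T y = scl c y"
proof -
  have l: "lin T" and TV: "\<And>x. x \<in> VJ J \<Longrightarrow> T x \<in> VJ J"
    and sa: "\<And>x y. x \<in> VJ J \<Longrightarrow> y \<in> VJ J \<Longrightarrow> ip J G (T x) y = ip J G x (T y)"
    using T by (auto simp: opJ_def)
  define u where "u = T y - scl c y"
  have uV: "u \<in> VJ J" unfolding u_def by (intro VJ_diff VJ_scl TV y)
  have "ip J G u u = ip J G (T y) u - c * ip J G y u"
    unfolding u_def[of] by (simp only: ip_diff_left ip_scl_left)
  also have "\<dots> = ip J G y (T u) - c * ip J G y u" using sa[OF y uV] by simp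
  also have "\<dots> = ip J G y (T u - scl c u)" by (simp add: ip_diff_right ip_scl_right)
  also have "T u - scl c u = 0" using h by (simp add: u_def)
  finally have "ip J G u u = 0" by simp
  then have "u = 0" using ip_eq0[OF uV] by simp
  then show ?thesis by (simp add: u_def)
qed

lemma S2:
  assumes T: "opJ T" and y: "y \<in> VJ J" and bc: "b^2 < 4 * c"
    and h: "scl c y + scl b (T y) + T (T y) = 0"
  shows "y = 0"
proof -
  have l: "lin T" and TV: "\<And>x. x \<in> VJ J \<Longrightarrow> T x \<in> VJ J"
    and sa: "\<And>x y. x \<in> VJ J \<Longrightarrow> y \<in> VJ J \<Longrightarrow> ip J G (T x) y = ip J G x (T y)"
    using T by (auto simp: opJ_def)
  define s where "s = T y + scl (b/2) y"
  have sV: "s \<in> VJ J" unfolding s_def by (intro VJ_add VJ_scl TV y)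
  define A where "A = ip J G y y"
  define B where "B = ip J G (T y) y"
  define C where "C = ip J G (T y) (T y)"
  have TT: "T (T y) = scl (-c) y + scl (-b) (T y)" proof -
    have "\<forall>l. c * y l + b * T y l + T (T y) l = 0" using h by (simp add: fun_eq_iff)
    note * = this
    show ?thesis
    proof (rule ext)
      fix l
      from * have "c * y l + b * T y l + T (T y) l = 0" by blast
      then show "T (T y) l = (scl (-c) y + scl (-b) (T y)) l" by simp
    qed
  qed
  have "C = ip J G y (T (T y))" unfolding C_def using sa[OF y TV[OF y]] by (simp add: ip_sym)
  also have "\<dots> = - (c * A + b * B)"
    unfolding TT A_def B_def
    by (simp only: ip_add_right ip_scl_right) (simp add: ip_sym[of y "T y"])
  finally have C: "C = - (c * A + b * B)" .
  have "ip J G s s = C + b * B + b^2/4 * A"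
    unfolding s_def A_def B_def C_def
    by (simp add: ip_add_left ip_add_right ip_scl_left ip_scl_right ip_sym[of y "T y"] power2_eq_square algebra_simps)
  also have "\<dots> = (b^2/4 - c) * A" using C by (simp add: algebra_simps)
  finally have ss: "ip J G s s = (b^2/4 - c) * A" .
  have "0 \<le> ip J G s s" by (rule ip_nonneg[OF sV])
  moreover have "0 \<le> A" unfolding A_def by (rule ip_nonneg[OF y])
  moreover have "b^2/4 - c < 0" using bc by simp
  ultimately have "A \<le> 0" using ss by (metis mult_neg_pos not_le order.not_eq_order_implies_strict)
  then show ?thesis using ip_eq0[OF y] A_def by simp
qed

lemma SD:
  assumes T: "opJ T"
  shows "degree q \<le> n \<Longrightarrow> q \<noteq> 0 \<Longrightarrow> v \<in> VJ J \<Longrightarrow> opev T q v = 0 \<Longrightarrow>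
    \<exists>\<Lambda> y r. finite \<Lambda> \<and> v = (\<Sum>\<mu>\<in>\<Lambda>. y \<mu>) \<and>
      (\<forall>\<mu>\<in>\<Lambda>. T (y \<mu>) = scl \<mu> (y \<mu>) \<and> y \<mu> = opev T (r \<mu>) v)"
proof (induction n arbitrary: q v rule: less_induct)
  case (less n q v)
  have l: "lin T" and TV: "\<And>x. x \<in> VJ J \<Longrightarrow> T x \<in> VJ J"
    using T by (auto simp: opJ_def)
  have oV: "\<And>p x. x \<in> VJ J \<Longrightarrow> opev T p x \<in> VJ J" by (rule opev_VJ) (auto intro: TV)
  show ?case
  proof (cases "degree q = 0")
    case True
    then obtain c where q: "q = [:c:]" by (metis degree_eq_zeroE)
    with less.prems have "c \<noteq> 0" by auto
    moreover have "scl c v = 0" using less.prems q by (simp add: opev_const scl_def zero_fun_def)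
    ultimately have "v = 0" by (auto simp: fun_eq_iff)
    then show ?thesis by (intro exI[of _ "{}"]) auto
  next
    case False
    then obtain z where z: "cev q z = 0" using cev_root by blast
    show ?thesis
    proof (cases "Im z = 0")
      case True
      define lam where "lam = Re z"
      have "z = complex_of_real lam" using True by (simp add: complex_eq_iff lam_def)
      then have "poly q lam = 0" using z cev_real[of q lam] by simp
      then obtain r where qr: "q = [:-lam,1:] * r" using poly_eq_0_iff_dvd by (metis dvdE)
      have r0: "r \<noteq> 0" using less.prems qr by auto
      have "degree ([:-lam,1:] * r) = degree [:-lam,1:] + degree r" by (rule degree_mult_eq) (use r0 in auto)
      then have dq: "degree q = Suc (degree r)" using qr by simp
      define w where "w = T v - scl lam v"
      have wV: "w \<in> VJ J" unfolding w_def by (intro VJ_diff VJ_scl TV less.prems)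
      have ow: "opev T [:-lam,1:] v = w" by (simp add: opev_lin1[OF l] w_def)
      have "opev T r w = opev T (r * [:-lam,1:]) v" by (simp only: opev_mult[OF l] ow)
      also have "\<dots> = 0" using less.prems qr by (simp add: mult.commute zero_fun_def)
      finally have rw: "opev T r w = 0" .
      have "\<exists>\<Lambda> y rr. finite \<Lambda> \<and> w = (\<Sum>\<mu>\<in>\<Lambda>. y \<mu>) \<and>
          (\<forall>\<mu>\<in>\<Lambda>. T (y \<mu>) = scl \<mu> (y \<mu>) \<and> y \<mu> = opev T (rr \<mu>) w)"
        by (rule less.IH[of "degree r" r w]) (use dq less.prems(1) r0 wV rw in auto)
      then obtain \<Lambda> y rr where fin: "finite \<Lambda>" and wsum: "w = (\<Sum>\<mu>\<in>\<Lambda>. y \<mu>)"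
        and eyr: "\<forall>\<mu>\<in>\<Lambda>. T (y \<mu>) = scl \<mu> (y \<mu>) \<and> y \<mu> = opev T (rr \<mu>) w"
        by blast
      have ey: "\<And>\<mu>. \<mu>\<in>\<Lambda> \<Longrightarrow> T (y \<mu>) = scl \<mu> (y \<mu>)" using eyr by blast
      have ry: "\<And>\<mu>. \<mu>\<in>\<Lambda> \<Longrightarrow> y \<mu> = opev T (rr \<mu>) w" using eyr by blast
      have yV: "\<And>\<mu>. \<mu>\<in>\<Lambda> \<Longrightarrow> y \<mu> \<in> VJ J" using ry oV wV by auto
      define v' where "v' = (\<Sum>\<mu>\<in>\<Lambda>-{lam}. scl (1/(\<mu>-lam)) (y \<mu>))"
      define e where "e = v - v'"
      have v'V: "v' \<in> VJ J" unfolding v'_def by (intro VJ_sum VJ_scl yV) auto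
      have eV: "e \<in> VJ J" unfolding e_def by (intro VJ_diff less.prems v'V)
      have Tv': "T v' - scl lam v' = (\<Sum>\<mu>\<in>\<Lambda>-{lam}. y \<mu>)"
      proof (rule ext)
        fix l0
        have "(T v' - scl lam v') l0 = (\<Sum>\<mu>\<in>\<Lambda>-{lam}. (\<mu> * y \<mu> l0 / (\<mu>-lam) - lam * (y \<mu> l0 / (\<mu>-lam))))"
          unfolding v'_def lin_sum[OF l] lin_scl[OF l]
          by (simp add: sum_fun_apply ey sum_subtractf sum_distrib_left)
        also have "\<dots> = (\<Sum>\<mu>\<in>\<Lambda>-{lam}. y \<mu> l0)"
        proof (intro sum.cong refl)
          fix x assume "x \<in> \<Lambda> - {lam}"
          then have nz: "x - lam \<noteq> 0" by auto
          have "x * y x l0 / (x-lam) - lam * (y x l0 / (x-lam)) = ((x - lam) * y x l0) / (x - lam)"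
            by (simp add: diff_divide_distrib left_diff_distrib)
          also have "\<dots> = y x l0" using nz by simp
          finally show "x * y x l0 / (x-lam) - lam * (y x l0 / (x-lam)) = y x l0" .
        qed
        finally show "(T v' - scl lam v') l0 = (\<Sum>\<mu>\<in>\<Lambda>-{lam}. y \<mu>) l0" by (simp add: sum_fun_apply)
      qed
      define y0 where "y0 = (if lam \<in> \<Lambda> then y lam else 0)"
      have y0: "w - (\<Sum>\<mu>\<in>\<Lambda>-{lam}. y \<mu>) = y0"
      proof (cases "lam \<in> \<Lambda>")
        case True
        then show ?thesis unfolding wsum y0_def using sum.remove[OF fin True, of y] by simp
      next
        case False
        then have "\<Lambda> - {lam} = \<Lambda>" by auto
        then show ?thesis using False by (simp add: wsum y0_def)
      qed
      have Ty0: "T y0 = scl lam y0" using ey by (simp add: y0_def lin_0[OF l])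
      have Te: "T e - scl lam e = y0"
      proof -
        have "T e - scl lam e = (T v - scl lam v) - (T v' - scl lam v')"
          by (simp add: e_def lin_minus[OF l] fun_eq_iff algebra_simps)
        then show ?thesis using Tv' y0 w_def by simp
      qed
      have eig: "T e = scl lam e" by (rule S1[OF T eV]) (simp add: Te Ty0)
      define y' where "y' = (\<lambda>\<mu>. if \<mu> = lam then e else scl (1/(\<mu>-lam)) (y \<mu>))"
      define r' where "r' = (\<lambda>\<mu>. if \<mu> = lam then 1 - (\<Sum>\<mu>\<in>\<Lambda>-{lam}. smult (1/(\<mu>-lam)) (rr \<mu> * [:-lam,1:]))
                                 else smult (1/(\<mu>-lam)) (rr \<mu> * [:-lam,1:]))"
      have opr: "\<And>\<mu>. \<mu> \<in> \<Lambda> \<Longrightarrow> opev T (smult (1/(\<mu>-lam)) (rr \<mu> * [:-lam,1:])) v = scl (1/(\<mu>-lam)) (y \<mu>)"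
        by (simp only: opev_smult opev_mult[OF l] ow ry)
      show ?thesis
      proof (intro exI conjI ballI)
        show "finite (insert lam \<Lambda>)" using fin by simp
        have "(\<Sum>\<mu>\<in>insert lam \<Lambda>. y' \<mu>) = y' lam + (\<Sum>\<mu>\<in>\<Lambda>-{lam}. y' \<mu>)"
          using sum.insert_remove[OF fin] by simp
        also have "(\<Sum>\<mu>\<in>\<Lambda>-{lam}. y' \<mu>) = v'" unfolding v'_def y'_def by (intro sum.cong) auto
        finally show "v = (\<Sum>\<mu>\<in>insert lam \<Lambda>. y' \<mu>)" by (simp add: y'_def e_def)
      next
        fix \<mu> assume m: "\<mu> \<in> insert lam \<Lambda>"
        show "T (y' \<mu>) = scl \<mu> (y' \<mu>)"
        proof (cases "\<mu> = lam")
          case True then show ?thesis by (simp add: y'_def eig)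
        next
          case False
          then have "\<mu> \<in> \<Lambda>" using m by auto
          then show ?thesis using False by (simp add: y'_def lin_scl[OF l] ey scl_scl mult.commute)
        qed
        show "y' \<mu> = opev T (r' \<mu>) v"
        proof (cases "\<mu> = lam")
          case True
          have "opev T (r' \<mu>) v = v - (\<Sum>\<mu>\<in>\<Lambda>-{lam}. opev T (smult (1/(\<mu>-lam)) (rr \<mu> * [:-lam,1:])) v)"
            using True by (simp add: r'_def opev_diff opev_one opev_sum)
          also have "\<dots> = v - v'" unfolding v'_def by (intro arg_cong2[where f="(-)"] refl sum.cong opr) auto
          finally show ?thesis using True by (simp add: y'_def e_def)
        next
          case False
          then have "\<mu> \<in> \<Lambda>" using m by auto
          then show ?thesis by (simp only: y'_def r'_def if_not_P[OF False] opr)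
        qed
      qed
    next
      case False
      define a where "a = Re z"
      define b where "b = Im z"
      have b0: "b \<noteq> 0" using False b_def by simp
      define h where "h = [:a^2 + b^2, -2*a, 1:]"
      have hz: "cev h z = 0"
        unfolding h_def
        by (simp add: cev_pCons complex_eq_iff a_def b_def power2_eq_square algebra_simps)
      have h0: "h \<noteq> 0" and dh: "degree h = 2" by (auto simp: h_def)
      define r where "r = q div h"
      define s where "s = q mod h"
      have qrs: "q = r * h + s" unfolding r_def s_def by simp
      have s0: "s = 0"
      proof (rule ccontr)
        assume "s \<noteq> 0"
        then have "degree s < 2" using degree_mod_less'[OF h0] dh s_def by simp
        then have ds: "degree s \<le> 1" by simp
        have "cev s z = cev q z - cev r z * cev h z" using qrs by (simp add: cev_add cev_mult)
        then have "cev s z = 0" using z hz by simp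
        moreover have "cev s z = of_real (coeff s 0) + of_real (coeff s 1) * z"
          using cev_bound[OF ds] by simp
        ultimately have c: "of_real (coeff s 0) + of_real (coeff s 1) * z = 0" by simp
        have "coeff s 1 * b = Im (of_real (coeff s 0) + of_real (coeff s 1) * z)" by (simp add: b_def)
        also have "\<dots> = 0" by (simp only: c) simp
        finally have "coeff s 1 * b = 0" .
        then have c1: "coeff s 1 = 0" using b0 by simp
        then have c0: "coeff s 0 = 0" using c by simp
        have "s = 0"
        proof (rule poly_eqI)
          fix i show "coeff s i = coeff 0 i"
            using c0 c1 ds by (cases i; cases "i - 1") (auto simp: coeff_eq_0)
        qed
        with \<open>s \<noteq> 0\<close> show False by simp
      qed
      have qr: "q = r * h" using qrs s0 by simp
      have r0: "r \<noteq> 0" using less.prems qr by auto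
      have "degree (r * h) = degree r + degree h" by (rule degree_mult_eq) (use r0 h0 in auto)
      then have dq: "degree q = degree r + 2" using qr dh by simp
      define w where "w = opev T h v"
      have wV: "w \<in> VJ J" unfolding w_def by (rule oV[OF less.prems(3)])
      have rw: "opev T r w = 0" using less.prems qr by (simp add: w_def opev_mult[OF l, symmetric] zero_fun_def)
      have "\<exists>\<Lambda> y rr. finite \<Lambda> \<and> w = (\<Sum>\<mu>\<in>\<Lambda>. y \<mu>) \<and>
          (\<forall>\<mu>\<in>\<Lambda>. T (y \<mu>) = scl \<mu> (y \<mu>) \<and> y \<mu> = opev T (rr \<mu>) w)"
        by (rule less.IH[of "degree r" r w]) (use dq less.prems(1) r0 wV rw in auto)
      then obtain \<Lambda> y rr where fin: "finite \<Lambda>" and wsum: "w = (\<Sum>\<mu>\<in>\<Lambda>. y \<mu>)"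
        and eyr: "\<forall>\<mu>\<in>\<Lambda>. T (y \<mu>) = scl \<mu> (y \<mu>) \<and> y \<mu> = opev T (rr \<mu>) w"
        by blast
      have ey: "\<And>\<mu>. \<mu>\<in>\<Lambda> \<Longrightarrow> T (y \<mu>) = scl \<mu> (y \<mu>)" using eyr by blast
      have ry: "\<And>\<mu>. \<mu>\<in>\<Lambda> \<Longrightarrow> y \<mu> = opev T (rr \<mu>) w" using eyr by blast
      have hpos: "\<And>x. 0 < poly h x"
      proof -
        fix x
        have "poly h x = (x - a)^2 + b^2" by (simp add: h_def power2_eq_square algebra_simps)
        also have "\<dots> > 0" using b0 by (simp add: add_nonneg_pos)
        finally show "0 < poly h x" .
      qed
      define v' where "v' = (\<Sum>\<mu>\<in>\<Lambda>. scl (1 / poly h \<mu>) (y \<mu>))"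
      have yV: "\<And>\<mu>. \<mu>\<in>\<Lambda> \<Longrightarrow> y \<mu> \<in> VJ J" using ry oV wV by auto
      have v'V: "v' \<in> VJ J" unfolding v'_def by (intro VJ_sum VJ_scl yV) auto
      have hv': "opev T h v' = w"
      proof -
        have "opev T h v' = (\<Sum>\<mu>\<in>\<Lambda>. scl (1 / poly h \<mu>) (opev T h (y \<mu>)))"
          unfolding v'_def lin_sum[OF lin_opev[OF l]] lin_scl[OF lin_opev[OF l]] ..
        also have "\<dots> = (\<Sum>\<mu>\<in>\<Lambda>. y \<mu>)"
        proof (intro sum.cong refl)
          fix \<mu> assume "\<mu> \<in> \<Lambda>"
          then have "opev T h (y \<mu>) = scl (poly h \<mu>) (y \<mu>)" by (rule opev_eig[OF l ey])
          then show "scl (1 / poly h \<mu>) (opev T h (y \<mu>)) = y \<mu>"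
            using hpos[of \<mu>] by (simp add: scl_scl)
        qed
        finally show ?thesis using wsum by simp
      qed
      define d where "d = v - v'"
      have dV: "d \<in> VJ J" unfolding d_def by (intro VJ_diff less.prems v'V)
      have "opev T h d = 0" unfolding d_def lin_minus[OF lin_opev[OF l]] hv' w_def by simp
      then have "scl (a^2+b^2) d + scl (-2*a) (T d) + T (T d) = 0"
        by (simp add: h_def opev_quad[OF l])
      moreover have "(-2*a)^2 < 4 * (a^2+b^2)" using b0 by (simp add: power2_eq_square) (simp add: not_square_less_zero order.not_eq_order_implies_strict zero_le_square)
      ultimately have "d = 0" using S2[OF T dV] by blast
      then have vv: "v = v'" by (simp add: d_def)
      show ?thesis
      proof (intro exI conjI ballI)
        show "finite \<Lambda>" by (rule fin)
        show "v = (\<Sum>\<mu>\<in>\<Lambda>. scl (1 / poly h \<mu>) (y \<mu>))" using vv v'_def by simp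
      next
        fix \<mu> assume m: "\<mu> \<in> \<Lambda>"
        show "T (scl (1 / poly h \<mu>) (y \<mu>)) = scl \<mu> (scl (1 / poly h \<mu>) (y \<mu>))"
          by (simp add: lin_scl[OF l] ey[OF m] scl_scl mult.commute)
        show "scl (1 / poly h \<mu>) (y \<mu>) = opev T (smult (1 / poly h \<mu>) (rr \<mu> * h)) v"
          by (simp add: opev_smult opev_mult[OF l] ry[OF m] w_def)
      qed
    qed
  qed
qed

lemma krylov:
  assumes T: "opJ T" and v: "v \<in> VJ J"
  shows "\<exists>q. q \<noteq> 0 \<and> opev T q v = 0"
proof -
  have TV: "\<And>x. x \<in> VJ J \<Longrightarrow> T x \<in> VJ J" using T by (auto simp: opJ_def)
  have TiV: "(T ^^ i) v \<in> VJ J" for i by (induction i) (auto simp: v TV)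
  define n where "n = card J"
  obtain c where c1: "\<exists>i\<in>{..n}. c i \<noteq> 0" and c2: "\<forall>j\<in>J. (\<Sum>i\<in>{..n}. c i * (T ^^ i) v j) = 0"
    using dep_lemma[OF finJ, of "{..n}" "\<lambda>i. (T ^^ i) v"] by (auto simp: n_def)
  define q where "q = (\<Sum>i\<le>n. monom (c i) i)"
  have cq: "coeff q i = (if i \<le> n then c i else 0)" for i
    unfolding q_def by (simp add: coeff_sum coeff_monom)
  have dq: "degree q \<le> n" by (rule degree_le) (auto simp: cq)
  show ?thesis
  proof (intro exI conjI)
    show "q \<noteq> 0" using c1 cq by (metis atMost_iff coeff_0)
    show "opev T q v = 0"
    proof (rule ext)
      fix l
      have "opev T q v l = (\<Sum>i\<le>n. c i * (T ^^ i) v l)" using opev_bound[OF dq, of T v] by (simp add: cq)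
      also have "\<dots> = 0"
      proof (cases "l \<in> J")
        case True then show ?thesis using c2 by simp
      next
        case False then show ?thesis using TiV by (simp add: VJ_def)
      qed
      finally show "opev T q v l = 0 l" by simp
    qed
  qed
qed

lemma SD':
  assumes T: "opJ T" and v: "v \<in> VJ J"
  shows "\<exists>\<Lambda> y r. finite \<Lambda> \<and> v = (\<Sum>\<mu>\<in>\<Lambda>. y \<mu>) \<and>
      (\<forall>\<mu>\<in>\<Lambda>. T (y \<mu>) = scl \<mu> (y \<mu>) \<and> y \<mu> = opev T (r \<mu>) v)"
proof -
  obtain q where "q \<noteq> 0" "opev T q v = 0" using krylov[OF T v] by blast
  then show ?thesis using SD[OF T, of q "degree q" v] v by blast
qed

lemma orth:
  assumes T: "opJ T" and x: "x \<in> VJ J" and y: "y \<in> VJ J"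
    and ex: "T x = scl a x" and ey: "T y = scl b y" and ab: "a \<noteq> b"
  shows "ip J G x y = 0"
proof -
  have "a * ip J G x y = ip J G (T x) y" by (simp add: ex ip_scl_left)
  also have "\<dots> = ip J G x (T y)" using T x y by (auto simp: opJ_def)
  also have "\<dots> = b * ip J G x y" by (simp add: ey ip_scl_right)
  finally show ?thesis using ab by simp
qed

lemma JD:
  assumes ops: "\<And>i. i \<in> S \<Longrightarrow> opJ (X i)"
    and comm: "\<And>i k x. i \<in> S \<Longrightarrow> k \<in> S \<Longrightarrow> X i (X k x) = X k (X i x)"
    and fS: "finite S"
  shows "v \<in> VJ J \<Longrightarrow> \<exists>K w. finite K \<and> v = (\<Sum>u\<in>K. w u) \<and>
           (\<forall>u\<in>K. w u \<in> VJ J \<and> (\<forall>i\<in>S. X i (w u) = scl (u i) (w u)))"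
proof -
  have "\<forall>v\<in>VJ J. \<exists>K w. finite K \<and> v = (\<Sum>u\<in>K. w u) \<and>
           (\<forall>u\<in>K. w u \<in> VJ J \<and> (\<forall>i\<in>F. X i (w u) = scl (u i) (w u)))" if "F \<subseteq> S" for F
    using finite_subset[OF that fS] that
  proof (induction F rule: finite_induct)
    case empty
    show ?case
    proof
      fix v :: "'a \<Rightarrow> real" assume "v \<in> VJ J"
      then show "\<exists>K w. finite K \<and> v = (\<Sum>u\<in>K. w u) \<and>
           (\<forall>u\<in>K. w u \<in> VJ J \<and> (\<forall>i\<in>{}. X i (w u) = scl (u i) (w u)))"
        by (intro exI[of _ "{\<lambda>_::'b. 0::real}"] exI[of _ "\<lambda>_. v"]) auto
    qed
  next
    case (insert p F)
    have pS: "p \<in> S" and FS: "F \<subseteq> S" using insert.prems by auto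
    have Tp: "opJ (X p)" by (rule ops[OF pS])
    have lp: "lin (X p)" and XpV: "\<And>x. x \<in> VJ J \<Longrightarrow> X p x \<in> VJ J" using Tp by (auto simp: opJ_def)
    show ?case
    proof
      fix v :: "'a \<Rightarrow> real" assume v: "v \<in> VJ J"
      obtain K w where fK: "finite K" and vs: "v = (\<Sum>u\<in>K. w u)"
        and wK: "\<forall>u\<in>K. w u \<in> VJ J \<and> (\<forall>i\<in>F. X i (w u) = scl (u i) (w u))"
        using insert.IH[OF FS] v by blast
      have "\<forall>u\<in>K. \<exists>\<Lambda> y r. finite \<Lambda> \<and> w u = (\<Sum>\<mu>\<in>\<Lambda>. y \<mu>) \<and>
            (\<forall>\<mu>\<in>\<Lambda>. X p (y \<mu>) = scl \<mu> (y \<mu>) \<and> y \<mu> = opev (X p) (r \<mu>) (w u))"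
      proof
        fix u assume "u \<in> K"
        then have "w u \<in> VJ J" using wK by blast
        then show "\<exists>\<Lambda> y r. finite \<Lambda> \<and> w u = (\<Sum>\<mu>\<in>\<Lambda>. y \<mu>) \<and>
            (\<forall>\<mu>\<in>\<Lambda>. X p (y \<mu>) = scl \<mu> (y \<mu>) \<and> y \<mu> = opev (X p) (r \<mu>) (w u))"
          by (rule SD'[OF Tp])
      qed
      from choice3[OF this] obtain \<Lambda> y r where D: "\<forall>u\<in>K. finite (\<Lambda> u) \<and> w u = (\<Sum>\<mu>\<in>\<Lambda> u. y u \<mu>) \<and>
            (\<forall>\<mu>\<in>\<Lambda> u. X p (y u \<mu>) = scl \<mu> (y u \<mu>) \<and> y u \<mu> = opev (X p) (r u \<mu>) (w u))"
        by (elim exE)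
      have D1: "\<forall>u\<in>K. finite (\<Lambda> u)" using D by blast
      have D2: "\<forall>u\<in>K. w u = (\<Sum>\<mu>\<in>\<Lambda> u. y u \<mu>)" using D by blast
      have D3: "\<forall>u\<in>K. \<forall>\<mu>\<in>\<Lambda> u. X p (y u \<mu>) = scl \<mu> (y u \<mu>)" using D by blast
      have D4: "\<forall>u\<in>K. \<forall>\<mu>\<in>\<Lambda> u. y u \<mu> = opev (X p) (r u \<mu>) (w u)" using D by blast
      define P where "P = Sigma K \<Lambda>"
      define upd where "upd = (\<lambda>pr::('b \<Rightarrow> real) \<times> real. (fst pr)(p := snd pr))"
      define K' where "K' = upd ` P"
      define yy where "yy = (\<lambda>pr::('b \<Rightarrow> real) \<times> real. y (fst pr) (snd pr))"
      define w' where "w' = (\<lambda>u'. \<Sum>pr\<in>{pr\<in>P. upd pr = u'}. yy pr)"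
      have fP: "finite P" unfolding P_def using fK D1 by (intro finite_SigmaI) auto
      have yyprop: "yy pr \<in> VJ J \<and> (\<forall>i\<in>insert p F. X i (yy pr) = scl (upd pr i) (yy pr))"
        if pr: "pr \<in> P" for pr
      proof -
        obtain u \<mu> where pr': "pr = (u, \<mu>)" "u \<in> K" "\<mu> \<in> \<Lambda> u" using pr by (auto simp: P_def)
        have eq: "y u \<mu> = opev (X p) (r u \<mu>) (w u)" and ep: "X p (y u \<mu>) = scl \<mu> (y u \<mu>)"
          using D3 D4 pr' by blast+
        have wuV: "w u \<in> VJ J" using wK pr' by auto
        have yV: "y u \<mu> \<in> VJ J" unfolding eq by (rule opev_VJ[OF XpV wuV])
        have "X i (y u \<mu>) = scl (u i) (y u \<mu>)" if iF: "i \<in> F" for i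
        proof -
          have iS: "i \<in> S" using iF FS by auto
          have li: "lin (X i)" using ops[OF iS] by (auto simp: opJ_def)
          have "X i (y u \<mu>) = opev (X p) (r u \<mu>) (X i (w u))"
            unfolding eq by (rule opev_comm[OF li]) (rule comm[OF iS pS])
          also have "X i (w u) = scl (u i) (w u)" using wK pr' iF by auto
          also have "opev (X p) (r u \<mu>) (scl (u i) (w u)) = scl (u i) (opev (X p) (r u \<mu>) (w u))"
            by (rule lin_scl[OF lin_opev[OF lp]])
          finally show ?thesis by (simp only: eq[symmetric])
        qed
        moreover have "p \<notin> F" by (rule insert.hyps)
        ultimately show ?thesis using yV ep pr' by (auto simp: yy_def upd_def)
      qed
      show "\<exists>K w. finite K \<and> v = (\<Sum>u\<in>K. w u) \<and>
           (\<forall>u\<in>K. w u \<in> VJ J \<and> (\<forall>i\<in>insert p F. X i (w u) = scl (u i) (w u)))"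
      proof (intro exI[of _ K'] exI[of _ w'] conjI)
        show "finite K'" unfolding K'_def using fP by simp
        have "(\<Sum>u\<in>K'. w' u) = (\<Sum>pr\<in>P. yy pr)"
          unfolding K'_def w'_def by (rule sum.image_gen[symmetric, OF fP])
        also have "\<dots> = (\<Sum>u\<in>K. \<Sum>\<mu>\<in>\<Lambda> u. y u \<mu>)"
          unfolding P_def yy_def by (subst sum.Sigma) (use fK D1 in \<open>auto simp: case_prod_beta'\<close>)
        also have "\<dots> = (\<Sum>u\<in>K. w u)" using D2 by (intro sum.cong) auto
        finally show "v = (\<Sum>u\<in>K'. w' u)" using vs by simp
      next
        have sub: "\<And>pr u'. pr \<in> {pr\<in>P. upd pr = u'} \<Longrightarrow> yy pr \<in> VJ J \<and> (\<forall>i\<in>insert p F. X i (yy pr) = scl (u' i) (yy pr))"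
          using yyprop by auto
        show "\<forall>u'\<in>K'. w' u' \<in> VJ J \<and> (\<forall>i\<in>insert p F. X i (w' u') = scl (u' i) (w' u'))"
        proof (intro ballI conjI)
          fix u' assume "u' \<in> K'"
          show "w' u' \<in> VJ J" unfolding w'_def by (intro VJ_sum) (use sub in auto)
        next
          fix u' i assume "u' \<in> K'" and i: "i \<in> insert p F"
          then have li: "lin (X i)" using ops pS FS by (auto simp: opJ_def)
          show "X i (w' u') = scl (u' i) (w' u')"
            unfolding w'_def lin_sum[OF li] scl_sum using sub i by (intro sum.cong) auto
        qed
      qed
    qed
  qed
  then show "v \<in> VJ J \<Longrightarrow> ?thesis" by blast
qed

end


definition del :: "'r \<Rightarrow> 'r \<Rightarrow> nat" where "del i = (\<lambda>j. if j = i then 1 else 0)"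

lemma finite_mons: "finite (mons t :: ('r::finite \<Rightarrow> nat) set)"
proof -
  have "mons t \<subseteq> PiE UNIV (\<lambda>_::'r. {..t})"
  proof
    fix \<alpha> :: "'r \<Rightarrow> nat" assume "\<alpha> \<in> mons t"
    then have "\<alpha> i \<le> t" for i
      using member_le_sum[of i UNIV \<alpha>] by (auto simp: mons_def mdeg_def)
    then show "\<alpha> \<in> PiE UNIV (\<lambda>_. {..t})" by (auto simp: PiE_def Pi_def extensional_def)
  qed
  moreover have "finite (PiE UNIV (\<lambda>_::'r. {..t}))" by (rule finite_PiE) auto
  ultimately show ?thesis by (rule finite_subset)
qed

lemma mdeg_add: "mdeg ((\<beta>::'r::finite \<Rightarrow> nat) + \<gamma>) = mdeg \<beta> + mdeg \<gamma>"
  by (simp add: mdeg_def sum.distrib)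
lemma mdeg_0[simp]: "mdeg (0::'r::finite \<Rightarrow> nat) = 0" by (simp add: mdeg_def)
lemma mdeg_del[simp]: "mdeg (del i :: 'r::finite \<Rightarrow> nat) = 1" by (simp add: mdeg_def del_def)
lemma mdeg_eq_0: "mdeg (\<alpha>::'r::finite \<Rightarrow> nat) = 0 \<longleftrightarrow> \<alpha> = 0"
  by (auto simp: mdeg_def fun_eq_iff)
lemma mons_iff: "\<alpha> \<in> mons t \<longleftrightarrow> mdeg \<alpha> \<le> t" by (simp add: mons_def)
lemma mons_mono: "s \<le> t \<Longrightarrow> mons s \<subseteq> mons t" by (auto simp: mons_def)

lemma add_fun_eq: "(\<lambda>i. (\<beta>::'r \<Rightarrow> nat) i + \<gamma> i) = \<beta> + \<gamma>" by (simp add: plus_fun_def)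

definition mev :: "('r::finite \<Rightarrow> nat) \<Rightarrow> ('r \<Rightarrow> real) \<Rightarrow> real" where
  "mev \<alpha> u = (\<Prod>i\<in>UNIV. u i ^ \<alpha> i)"

lemma mev_add: "mev (\<beta> + \<gamma>) u = mev \<beta> u * mev \<gamma> u"
  by (simp add: mev_def power_add prod.distrib)
lemma mev_0[simp]: "mev 0 u = 1" by (simp add: mev_def)
lemma mev_del: "mev (del i) u = u i"
proof -
  have "mev (del i) u = (\<Prod>j\<in>UNIV. if j = i then u i else 1)"
    unfolding mev_def del_def by (intro prod.cong) auto
  then show ?thesis by simp
qed
lemma monom_eval_mev: "monom_eval \<alpha> \<xi> = mev \<alpha> (\<lambda>i. \<xi> $ i)"
  by (simp add: monom_eval_def mev_def)

lemma split_deg: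
  "mdeg (\<alpha>::'r::finite \<Rightarrow> nat) = p + q \<Longrightarrow> \<exists>\<beta> \<gamma>. \<alpha> = \<beta> + \<gamma> \<and> mdeg \<beta> = p \<and> mdeg \<gamma> = q"
proof (induction p arbitrary: \<alpha>)
  case 0
  show ?case by (rule exI[of _ "0::'r\<Rightarrow>nat"], rule exI[of _ \<alpha>]) (use 0 in \<open>simp add: mdeg_def\<close>)
next
  case (Suc p)
  then have "mdeg \<alpha> \<noteq> 0" by simp
  then obtain i where i: "\<alpha> i > 0" by (auto simp: mdeg_eq_0 fun_eq_iff)
  define \<alpha>' where "\<alpha>' = \<alpha> - del i"
  have a: "\<alpha> = \<alpha>' + del i" using i by (auto simp: \<alpha>'_def del_def fun_eq_iff)
  have "mdeg \<alpha> = mdeg \<alpha>' + 1" unfolding a by (simp only: mdeg_add mdeg_del)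
  then have "mdeg \<alpha>' = p + q" using Suc.prems by simp
  then obtain \<beta> \<gamma> where "\<alpha>' = \<beta> + \<gamma>" "mdeg \<beta> = p" "mdeg \<gamma> = q" using Suc.IH by blast
  note bg = this
  show ?case
  proof (rule exI[of _ "\<beta> + del i"], rule exI[of _ \<gamma>], intro conjI)
    show "\<alpha> = \<beta> + del i + \<gamma>" using a bg by (simp add: ac_simps)
    show "mdeg (\<beta> + del i) = Suc p" using bg by (simp only: mdeg_add mdeg_del)
    show "mdeg \<gamma> = q" by (rule bg(3))
  qed
qed

lemma split_deg2: "mdeg (\<alpha>::'r::finite \<Rightarrow> nat) \<le> 2 * t \<Longrightarrow> \<exists>\<beta> \<gamma>. \<alpha> = \<beta> + \<gamma> \<and> mdeg \<beta> \<le> t \<and> mdeg \<gamma> \<le> t"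
proof -
  assume h: "mdeg \<alpha> \<le> 2 * t"
  have "mdeg \<alpha> = min (mdeg \<alpha>) t + (mdeg \<alpha> - min (mdeg \<alpha>) t)" by simp
  from split_deg[OF this] obtain \<beta> \<gamma> where "\<alpha> = \<beta> + \<gamma>" "mdeg \<beta> = min (mdeg \<alpha>) t"
    "mdeg \<gamma> = mdeg \<alpha> - min (mdeg \<alpha>) t" by blast
  then show ?thesis using h by (intro exI[of _ \<beta>] exI[of _ \<gamma>]) auto
qed

lemma mons_del: "\<beta> \<in> mons (t - 1) \<Longrightarrow> 1 \<le> t \<Longrightarrow> \<beta> + del i \<in> mons t"
  by (auto simp: mons_def mdeg_add)

lemma peval_cut: "deg_le m p \<Longrightarrow> m \<le> N \<Longrightarrow> peval N p \<xi> = peval m p \<xi>"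
  unfolding peval_def
  by (rule sum.mono_neutral_right) (auto simp: finite_mons[unfolded mons_def] mons_def deg_le_def)

lemma pmul_alt:
  assumes p: "deg_le m p" and q: "deg_le n q"
  shows "pmul p q \<alpha> = (\<Sum>\<beta>\<in>mons m. \<Sum>\<gamma>\<in>mons n. if \<beta> + \<gamma> = \<alpha> then p \<beta> * q \<gamma> else 0)"
proof -
  let ?B = "{\<beta>. \<forall>i. \<beta> i \<le> \<alpha> i}"
  have fB: "finite ?B"
  proof -
    have "?B \<subseteq> PiE UNIV (\<lambda>i. {..\<alpha> i})" by (auto simp: PiE_def Pi_def extensional_def)
    moreover have "finite (PiE UNIV (\<lambda>i. {..\<alpha> i}))" by (rule finite_PiE) auto
    ultimately show ?thesis by (rule finite_subset)
  qed
  have pz: "\<And>\<beta>. \<not> mdeg \<beta> \<le> m \<Longrightarrow> p \<beta> = 0" using p by (simp add: deg_le_def not_le)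
  have inner: "(\<Sum>\<gamma>\<in>mons n. if \<beta> + \<gamma> = \<alpha> then p \<beta> * q \<gamma> else 0)
      = (if \<beta> \<in> ?B then p \<beta> * q (\<lambda>i. \<alpha> i - \<beta> i) else 0)" for \<beta>
  proof (cases "\<beta> \<in> ?B")
    case True
    then have eq: "\<And>\<gamma>. (\<beta> + \<gamma> = \<alpha>) \<longleftrightarrow> \<gamma> = (\<lambda>i. \<alpha> i - \<beta> i)"
      by (auto simp: fun_eq_iff) (metis add_diff_cancel_left')
    have "(\<Sum>\<gamma>\<in>mons n. if \<beta> + \<gamma> = \<alpha> then p \<beta> * q \<gamma> else 0)
        = (\<Sum>\<gamma>\<in>mons n. if \<gamma> = (\<lambda>i. \<alpha> i - \<beta> i) then p \<beta> * q \<gamma> else 0)"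
      by (simp only: eq)
    also have "\<dots> = (if (\<lambda>i. \<alpha> i - \<beta> i) \<in> mons n then p \<beta> * q (\<lambda>i. \<alpha> i - \<beta> i) else 0)"
      by (simp add: finite_mons)
    also have "\<dots> = p \<beta> * q (\<lambda>i. \<alpha> i - \<beta> i)" using q by (auto simp: deg_le_def mons_def)
    finally show ?thesis using True by simp
  next
    case False
    note F = False
    then obtain i where i: "\<not> \<beta> i \<le> \<alpha> i" by auto
    have "\<And>\<gamma>. \<beta> + \<gamma> \<noteq> \<alpha>"
    proof
      fix \<gamma> assume "\<beta> + \<gamma> = \<alpha>"
      then have "\<beta> i + \<gamma> i = \<alpha> i" by (metis plus_fun_apply)
      then show False using i by simp
    qed
    then show ?thesis using F by (simp del: mem_Collect_eq)
  qed
  have "(\<Sum>\<beta>\<in>mons m. \<Sum>\<gamma>\<in>mons n. if \<beta> + \<gamma> = \<alpha> then p \<beta> * q \<gamma> else 0)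
      = (\<Sum>\<beta>\<in>mons m. if \<beta> \<in> ?B then p \<beta> * q (\<lambda>i. \<alpha> i - \<beta> i) else 0)"
    by (simp only: inner)
  also have "\<dots> = (\<Sum>\<beta>\<in>mons m \<inter> ?B. p \<beta> * q (\<lambda>i. \<alpha> i - \<beta> i))"
    by (simp add: sum.inter_restrict finite_mons)
  also have "\<dots> = (\<Sum>\<beta>\<in>?B. p \<beta> * q (\<lambda>i. \<alpha> i - \<beta> i))"
    by (rule sum.mono_neutral_left) (use fB pz in \<open>auto simp: mons_def\<close>)
  finally show ?thesis by (simp add: pmul_def)
qed

lemma deg_le_pmul: assumes p: "deg_le m p" and q: "deg_le n q" shows "deg_le (m + n) (pmul p q)"
  unfolding deg_le_def
proof (intro allI impI)
  fix \<alpha> :: "'a \<Rightarrow> nat" assume a: "m + n < mdeg \<alpha>"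
  have "\<And>\<beta> \<gamma>. \<beta> \<in> mons m \<Longrightarrow> \<gamma> \<in> mons n \<Longrightarrow> \<beta> + \<gamma> \<noteq> \<alpha>"
    using a by (auto simp: mons_def mdeg_add)
  then show "pmul p q \<alpha> = 0" by (simp add: pmul_alt[OF p q])
qed

lemma peval_pmul: assumes p: "deg_le m p" and q: "deg_le n q"
  shows "peval (m + n) (pmul p q) \<xi> = peval m p \<xi> * peval n q \<xi>"
proof -
  have "peval (m + n) (pmul p q) \<xi>
      = (\<Sum>\<alpha>\<in>mons (m+n). \<Sum>\<beta>\<in>mons m. \<Sum>\<gamma>\<in>mons n. if \<beta> + \<gamma> = \<alpha> then p \<beta> * q \<gamma> * monom_eval \<alpha> \<xi> else 0)"
    unfolding peval_def pmul_alt[OF p q] sum_distrib_right by (intro sum.cong refl) auto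
  also have "\<dots> = (\<Sum>\<beta>\<in>mons m. \<Sum>\<gamma>\<in>mons n. \<Sum>\<alpha>\<in>mons (m+n). if \<alpha> = \<beta> + \<gamma> then p \<beta> * q \<gamma> * monom_eval \<alpha> \<xi> else 0)"
    by (subst sum.swap, subst (2) sum.swap) (simp add: eq_commute)
  also have "\<dots> = (\<Sum>\<beta>\<in>mons m. \<Sum>\<gamma>\<in>mons n. p \<beta> * q \<gamma> * monom_eval (\<beta> + \<gamma>) \<xi>)"
    by (intro sum.cong refl) (auto simp: finite_mons[unfolded mons_def] mons_def mdeg_add)
  also have "\<dots> = peval m p \<xi> * peval n q \<xi>"
    by (simp add: peval_def sum_product monom_eval_mev mev_add algebra_simps)
  finally show ?thesis .
qed


lemma deg_le_mono: "deg_le m p \<Longrightarrow> m \<le> n \<Longrightarrow> deg_le n p" by (auto simp: deg_le_def)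
lemma deg_le_add: "deg_le m p \<Longrightarrow> deg_le m q \<Longrightarrow> deg_le m (\<lambda>\<alpha>. p \<alpha> + q \<alpha>)" by (auto simp: deg_le_def)
lemma deg_le_diff: "deg_le m p \<Longrightarrow> deg_le m q \<Longrightarrow> deg_le m (\<lambda>\<alpha>. p \<alpha> - q \<alpha>)" by (auto simp: deg_le_def)
lemma deg_le_scale: "deg_le m p \<Longrightarrow> deg_le m (\<lambda>\<alpha>. c * p \<alpha>)" by (auto simp: deg_le_def)
lemma deg_le_sum: "(\<And>i. i \<in> I \<Longrightarrow> deg_le m (f i)) \<Longrightarrow> deg_le m (\<lambda>\<alpha>. \<Sum>i\<in>I. f i \<alpha>)"
  by (auto simp: deg_le_def)
lemma deg_le_sum_list: "(\<And>q. q \<in> set qs \<Longrightarrow> deg_le m (f q)) \<Longrightarrow> deg_le m (\<lambda>\<alpha>. \<Sum>q\<leftarrow>qs. f q \<alpha>)"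
  by (induction qs) (auto simp: deg_le_def)

lemma peval_add: "peval N (\<lambda>\<alpha>. p \<alpha> + q \<alpha>) \<xi> = peval N p \<xi> + peval N q \<xi>"
  by (simp add: peval_def sum.distrib distrib_right)
lemma peval_diff: "peval N (\<lambda>\<alpha>. p \<alpha> - q \<alpha>) \<xi> = peval N p \<xi> - peval N q \<xi>"
  by (simp add: peval_def sum_subtractf left_diff_distrib)
lemma peval_scale: "peval N (\<lambda>\<alpha>. c * p \<alpha>) \<xi> = c * peval N p \<xi>"
  by (simp add: peval_def sum_distrib_left algebra_simps)
lemma peval_sum: "peval N (\<lambda>\<alpha>. \<Sum>i\<in>I. f i \<alpha>) \<xi> = (\<Sum>i\<in>I. peval N (f i) \<xi>)"
  unfolding peval_def sum_distrib_right by (rule sum.swap)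
lemma peval_sum_list: "peval N (\<lambda>\<alpha>. \<Sum>q\<leftarrow>qs. f q \<alpha>) \<xi> = (\<Sum>q\<leftarrow>qs. peval N (f q) \<xi>)"
proof (induction qs)
  case Nil then show ?case by (simp add: peval_def)
next
  case (Cons a qs)
  have "peval N (\<lambda>\<alpha>. \<Sum>q\<leftarrow>a # qs. f q \<alpha>) \<xi> = peval N (\<lambda>\<alpha>. f a \<alpha> + (\<Sum>q\<leftarrow>qs. f q \<alpha>)) \<xi>" by simp
  also have "\<dots> = peval N (f a) \<xi> + peval N (\<lambda>\<alpha>. \<Sum>q\<leftarrow>qs. f q \<alpha>) \<xi>" by (rule peval_add)
  finally show ?case using Cons by simp
qed

lemma sos_prop: assumes "sos t s" shows "deg_le (2 * t) s \<and> 0 \<le> peval (2 * t) s \<xi>"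
proof -
  obtain qs where qs: "\<forall>q\<in>set qs. deg_le t q" and s: "s = (\<lambda>\<alpha>. \<Sum>q\<leftarrow>qs. pmul q q \<alpha>)"
    using assms by (auto simp: sos_def)
  have "deg_le (2 * t) s" unfolding s
    by (rule deg_le_sum_list) (use qs deg_le_pmul[of t _ t] in \<open>auto simp: mult_2\<close>)
  moreover have "peval (2 * t) s \<xi> = (\<Sum>q\<leftarrow>qs. (peval t q \<xi>)^2)"
    unfolding s peval_sum_list
    by (rule arg_cong[where f=sum_list], rule map_cong[OF refl])
       (use qs peval_pmul[of t _ t] in \<open>auto simp: mult_2 power2_eq_square\<close>)
  moreover have "0 \<le> (\<Sum>q\<leftarrow>qs. (peval t q \<xi>)^2)" by (rule sum_list_nonneg) auto
  ultimately show ?thesis by simp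
qed

lemma deg_le_pconst: "deg_le 0 (pconst a)" by (auto simp: deg_le_def pconst_def mdeg_def)
lemma peval_pconst: "peval N (pconst a) \<xi> = a"
proof -
  have "peval N (pconst a) \<xi> = (\<Sum>\<alpha>\<in>mons N. if \<alpha> = (\<lambda>_. 0) then a * monom_eval \<alpha> \<xi> else 0)"
    unfolding peval_def pconst_def by (intro sum.cong) auto
  also have "\<dots> = a" by (simp add: finite_mons[unfolded mons_def mdeg_def] mons_def mdeg_def monom_eval_def)
  finally show ?thesis .
qed
lemma deg_le_pvar: "deg_le 1 (pvar i)" by (auto simp: deg_le_def pvar_def mdeg_def)
lemma peval_pvar: "1 \<le> N \<Longrightarrow> peval N (pvar i) \<xi> = \<xi> $ i"
proof -
  assume N: "1 \<le> N"
  have d: "(\<lambda>j. if j = i then 1 else 0) = del i" by (simp add: del_def)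
  have "peval N (pvar i) \<xi> = (\<Sum>\<alpha>\<in>mons N. if \<alpha> = del i then monom_eval \<alpha> \<xi> else 0)"
    unfolding peval_def pvar_def d by (intro sum.cong) auto
  also have "\<dots> = monom_eval (del i) \<xi>" using N by (simp add: finite_mons[unfolded mons_def] mons_def)
  finally show ?thesis by (simp add: monom_eval_mev mev_del)
qed

lemma gpoly_prop: "deg_le 2 (gpoly Gam mu Lam) \<and> peval 2 (gpoly Gam mu Lam) \<xi> = gfun Gam mu Lam \<xi>"
proof -
  define l where "l = (\<lambda>i \<beta>. pvar i \<beta> - pconst (mu $ i) \<beta>)"
  define M where "M = matrix_inv Lam"
  have dl: "deg_le 1 (l i)" for i unfolding l_def
    by (rule deg_le_diff[OF deg_le_pvar deg_le_mono[OF deg_le_pconst]]) simp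
  have pl: "peval 1 (l i) \<xi> = \<xi> $ i - mu $ i" for i
    unfolding l_def by (simp add: peval_diff peval_pvar peval_pconst)
  have g: "gpoly Gam mu Lam = (\<lambda>\<alpha>. pconst Gam \<alpha> - (\<Sum>i\<in>UNIV. \<Sum>j\<in>UNIV. M $ i $ j * pmul (l i) (l j) \<alpha>))"
    by (rule ext) (simp add: gpoly_def l_def M_def)
  have dp: "deg_le 2 (pmul (l i) (l j))" for i j using deg_le_pmul[OF dl[of i] dl[of j]] by (simp add: numeral_2_eq_2)
  have "deg_le 2 (gpoly Gam mu Lam)" unfolding g
    by (intro deg_le_diff deg_le_sum deg_le_scale dp deg_le_mono[OF deg_le_pconst]) simp
  moreover have "peval 2 (gpoly Gam mu Lam) \<xi> = Gam - (\<Sum>i\<in>UNIV. \<Sum>j\<in>UNIV. M $ i $ j * ((\<xi> $ i - mu $ i) * (\<xi> $ j - mu $ j)))"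
  proof -
    have "peval 2 (pmul (l i) (l j)) \<xi> = (\<xi> $ i - mu $ i) * (\<xi> $ j - mu $ j)" for i j
      using peval_pmul[OF dl[of i] dl[of j], where \<xi>=\<xi>] pl by (simp add: numeral_2_eq_2)
    then show ?thesis unfolding g peval_diff peval_sum peval_scale peval_pconst by simp
  qed
  moreover have "gfun Gam mu Lam \<xi> = Gam - (\<Sum>i\<in>UNIV. \<Sum>j\<in>UNIV. M $ i $ j * ((\<xi> $ i - mu $ i) * (\<xi> $ j - mu $ j)))"
    unfolding gfun_def M_def
    by (simp add: inner_vec_def matrix_vector_mult_def sum_distrib_left algebra_simps)
  ultimately show ?thesis by simp
qed

lemma QM_prop:
  assumes "1 \<le> k" and "QM Gam mu Lam k p" and "\<xi> \<in> Uset Gam mu Lam"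
  shows "deg_le (2 * k) p \<and> 0 \<le> peval (2 * k) p \<xi>"
proof -
  obtain s0 s1 where s0: "sos k s0" and s1: "sos (k - 1) s1"
    and p: "p = (\<lambda>\<alpha>. s0 \<alpha> + pmul (gpoly Gam mu Lam) s1 \<alpha>)"
    using assms(2) by (auto simp: QM_def)
  have e: "2 + 2 * (k - 1) = 2 * k" using assms(1) by simp
  have g: "deg_le 2 (gpoly Gam mu Lam)" "peval 2 (gpoly Gam mu Lam) \<xi> = gfun Gam mu Lam \<xi>"
    using gpoly_prop by blast+
  have d1: "deg_le (2 * k) (pmul (gpoly Gam mu Lam) s1)"
    using deg_le_pmul[OF g(1) conjunct1[OF sos_prop[OF s1]]] e by simp
  have v1: "peval (2 * k) (pmul (gpoly Gam mu Lam) s1) \<xi> = gfun Gam mu Lam \<xi> * peval (2 * (k - 1)) s1 \<xi>"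
    using peval_pmul[OF g(1) conjunct1[OF sos_prop[OF s1]], where \<xi>=\<xi>] e g(2) by simp
  have "0 \<le> gfun Gam mu Lam \<xi>" using assms(3) by (simp add: Uset_def)
  then have "0 \<le> gfun Gam mu Lam \<xi> * peval (2 * (k - 1)) s1 \<xi>"
    using sos_prop[OF s1, of \<xi>] by simp
  then show ?thesis unfolding p using sos_prop[OF s0, of \<xi>] d1 v1
    by (simp add: deg_le_add peval_add)
qed



lemma triple: "(\<Sum>\<beta>\<in>A. \<Sum>\<gamma>\<in>B. \<Sum>u\<in>K. (F u::real) * a \<beta> u * b \<gamma> u)
    = (\<Sum>u\<in>K. F u * (\<Sum>\<beta>\<in>A. a \<beta> u) * (\<Sum>\<gamma>\<in>B. b \<gamma> u))"
proof -
  have "(\<Sum>u\<in>K. F u * (\<Sum>\<beta>\<in>A. a \<beta> u) * (\<Sum>\<gamma>\<in>B. b \<gamma> u))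
      = (\<Sum>u\<in>K. \<Sum>\<beta>\<in>A. \<Sum>\<gamma>\<in>B. F u * a \<beta> u * b \<gamma> u)"
    by (intro sum.cong refl) (simp add: sum_distrib_left sum_distrib_right, rule sum.swap)
  also have "\<dots> = (\<Sum>\<beta>\<in>A. \<Sum>u\<in>K. \<Sum>\<gamma>\<in>B. F u * a \<beta> u * b \<gamma> u)" by (rule sum.swap)
  also have "\<dots> = (\<Sum>\<beta>\<in>A. \<Sum>\<gamma>\<in>B. \<Sum>u\<in>K. F u * a \<beta> u * b \<gamma> u)"
    by (intro sum.cong refl) (rule sum.swap)
  finally show ?thesis by simp
qed

locale momset =
  fixes z :: "('r::finite \<Rightarrow> nat) \<Rightarrow> real" and t :: nat and J :: "('r \<Rightarrow> nat) set"
    and a :: "('r \<Rightarrow> nat) \<Rightarrow> ('r \<Rightarrow> nat) \<Rightarrow> real"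
  assumes t1: "1 \<le> t"
    and Jsub: "J \<subseteq> mons (t - 1)"
    and A1: "\<And>\<alpha> \<rho>. \<alpha> \<in> mons t \<Longrightarrow> \<rho> \<in> mons t \<Longrightarrow> z (\<rho> + \<alpha>) = (\<Sum>j\<in>J. a \<alpha> j * z (\<rho> + j))"
    and A2: "\<And>\<alpha>. \<alpha> \<in> J \<Longrightarrow> a \<alpha> = (\<lambda>j. if j = \<alpha> then 1 else 0)"
    and A3: "\<And>\<alpha> j. j \<notin> J \<Longrightarrow> a \<alpha> j = 0"
    and Zpos: "\<And>x. x \<in> VJ J \<Longrightarrow> x \<noteq> 0 \<Longrightarrow> 0 < ip J (\<lambda>j l. z (j + l)) x x"
begin

abbreviation "G \<equiv> (\<lambda>j l. z (j + l))"

lemma finJ: "finite J" using Jsub finite_mons finite_subset by blast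

sublocale spd J G
  by unfold_locales (auto simp: finJ add.commute Zpos)

lemma Jt: "J \<subseteq> mons t" using Jsub mons_mono[of "t - 1" t] by auto

lemma aV: "a \<alpha> \<in> VJ J" by (simp add: VJ_def A3)

lemma KF: assumes "\<alpha> \<in> mons t" shows "ip J G (a \<alpha>) y = (\<Sum>l\<in>J. y l * z (l + \<alpha>))"
proof -
  have "ip J G (a \<alpha>) y = (\<Sum>l\<in>J. y l * (\<Sum>m\<in>J. a \<alpha> m * z (l + m)))"
    unfolding ip_def by (subst sum.swap) (simp add: sum_distrib_left algebra_simps add.commute)
  also have "\<dots> = (\<Sum>l\<in>J. y l * z (l + \<alpha>))"
    by (intro sum.cong refl) (use A1[OF assms] Jt in auto)
  finally show ?thesis .
qed

lemma unit_sum: "(\<Sum>l\<in>J. (y l::real) * (if l = \<gamma> then 1 else 0)) = (if \<gamma> \<in> J then y \<gamma> else 0)"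
proof -
  have "(\<Sum>l\<in>J. y l * (if l = \<gamma> then 1 else 0)) = (\<Sum>l\<in>J. if l = \<gamma> then y l else 0)"
    by (intro sum.cong) auto
  then show ?thesis using finJ by simp
qed
lemma unit_sum': "(\<Sum>l\<in>J. (if l = \<gamma> then 1 else 0) * (y l::real)) = (if \<gamma> \<in> J then y \<gamma> else 0)"
  using unit_sum[of y \<gamma>] by (simp add: mult.commute)
lemma unit_sum'': "(\<Sum>l\<in>J. (y l::real) * (if \<gamma> = l then 1 else 0)) = (if \<gamma> \<in> J then y \<gamma> else 0)"
  using unit_sum[of y \<gamma>] by (simp add: eq_commute)

lemma KF_unit: assumes "\<alpha> \<in> mons t" "\<gamma> \<in> J" shows "ip J G (a \<alpha>) (a \<gamma>) = z (\<gamma> + \<alpha>)"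
proof -
  have "ip J G (a \<alpha>) (a \<gamma>) = (\<Sum>l\<in>J. (if l = \<gamma> then 1 else 0) * z (l + \<alpha>))"
    using KF[OF assms(1)] A2[OF assms(2)] by simp
  also have "\<dots> = z (\<gamma> + \<alpha>)" using assms(2) by (simp only: unit_sum') simp
  finally show ?thesis .
qed

lemma expand: "x \<in> VJ J \<Longrightarrow> x = (\<Sum>\<gamma>\<in>J. scl (x \<gamma>) (a \<gamma>))"
proof (rule ext)
  fix l assume x: "x \<in> VJ J"
  have "(\<Sum>\<gamma>\<in>J. scl (x \<gamma>) (a \<gamma>)) l = (\<Sum>\<gamma>\<in>J. x \<gamma> * (if l = \<gamma> then 1 else 0))"
    by (simp add: sum_fun_apply A2)
  also have "\<dots> = (if l \<in> J then x l else 0)" by (rule unit_sum'')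
  also have "\<dots> = x l" using x by (simp add: VJ_def)
  finally show "x l = (\<Sum>\<gamma>\<in>J. scl (x \<gamma>) (a \<gamma>)) l" by simp
qed

lemma ND: assumes d: "d \<in> VJ J" and h: "\<And>\<gamma>. \<gamma> \<in> J \<Longrightarrow> ip J G d (a \<gamma>) = 0" shows "d = 0"
proof -
  have "ip J G d d = ip J G d (\<Sum>\<gamma>\<in>J. scl (d \<gamma>) (a \<gamma>))" using expand[OF d] by simp
  also have "\<dots> = 0" by (simp add: ip_sum_right ip_scl_right h)
  finally show ?thesis using ip_eq0[OF d] by simp
qed

definition X :: "'r \<Rightarrow> (('r \<Rightarrow> nat) \<Rightarrow> real) \<Rightarrow> (('r \<Rightarrow> nat) \<Rightarrow> real)" where
  "X i x = (\<lambda>l. \<Sum>j\<in>J. x j * a (j + del i) l)"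

lemma X_sum: "X i x = (\<Sum>j\<in>J. scl (x j) (a (j + del i)))"
  by (simp add: X_def fun_eq_iff sum_fun_apply)

lemma XV: "X i x \<in> VJ J" by (simp add: X_def VJ_def A3)

lemma jdel: "j \<in> J \<Longrightarrow> j + del i \<in> mons t"
  using Jsub mons_del[OF _ t1] by auto

lemma ipX: "ip J G (X i x) y = (\<Sum>j\<in>J. x j * (\<Sum>l\<in>J. y l * z (l + (j + del i))))"
  unfolding X_sum ip_sum_left ip_scl_left by (intro sum.cong refl) (simp add: KF[OF jdel])

lemma opX: "opJ (X i)"
  unfolding opJ_def
proof (intro conjI ballI)
  show "lin (X i)" by (simp add: lin_def X_def fun_eq_iff sum.distrib algebra_simps sum_distrib_left)
  show "\<And>x. X i x \<in> VJ J" by (rule XV)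
  fix x y
  have "ip J G x (X i y) = ip J G (X i y) x" by (rule ip_sym)
  also have "\<dots> = (\<Sum>l\<in>J. y l * (\<Sum>j\<in>J. x j * z (j + (l + del i))))" by (rule ipX)
  also have "\<dots> = (\<Sum>j\<in>J. x j * (\<Sum>l\<in>J. y l * z (l + (j + del i))))"
    by (simp add: sum_distrib_left algebra_simps) (subst sum.swap, simp add: ac_simps)
  also have "\<dots> = ip J G (X i x) y" by (simp add: ipX)
  finally show "ip J G (X i x) y = ip J G x (X i y)" by simp
qed

lemma F4: assumes b: "\<beta> \<in> mons (t - 1)" shows "X i (a \<beta>) = a (\<beta> + del i)"
proof -
  have bt: "\<beta> \<in> mons t" using b mons_mono[of "t-1" t] by auto
  have bd: "\<beta> + del i \<in> mons t" using mons_del[OF b t1] .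
  have "X i (a \<beta>) - a (\<beta> + del i) = 0"
  proof (rule ND)
    show "X i (a \<beta>) - a (\<beta> + del i) \<in> VJ J" by (intro VJ_diff XV aV)
    fix \<gamma> assume g: "\<gamma> \<in> J"
    have gd: "\<gamma> + del i \<in> mons t" by (rule jdel[OF g])
    have "ip J G (X i (a \<beta>)) (a \<gamma>) = (\<Sum>j\<in>J. a \<beta> j * z (\<gamma> + (j + del i)))"
      unfolding ipX A2[OF g] using g by (simp only: unit_sum') simp
    also have "\<dots> = z (\<gamma> + del i + \<beta>)"
      using A1[OF bt gd] by (simp add: ac_simps)
    also have "\<dots> = ip J G (a (\<beta> + del i)) (a \<gamma>)"
      using KF_unit[OF bd g] by (simp add: ac_simps)
    finally show "ip J G (X i (a \<beta>) - a (\<beta> + del i)) (a \<gamma>) = 0" by (simp add: ip_diff_left)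
  qed
  then show ?thesis by simp
qed

lemma COMM: "X i (X k x) = X k (X i x)"
proof -
  have E: "ip J G (X i (X k x)) (a \<gamma>) = (\<Sum>j\<in>J. x j * z (\<gamma> + del i + (j + del k)))" if g: "\<gamma> \<in> J" for i k \<gamma>
  proof -
    have gd: "\<gamma> + del i \<in> mons t" by (rule jdel[OF g])
    have gt: "\<gamma> \<in> mons (t - 1)" using g Jsub by auto
    have "ip J G (X i (X k x)) (a \<gamma>) = ip J G (X k x) (X i (a \<gamma>))"
      using opX[of i] XV aV by (auto simp: opJ_def)
    also have "\<dots> = ip J G (a (\<gamma> + del i)) (X k x)" by (simp add: F4[OF gt] ip_sym)
    also have "\<dots> = (\<Sum>l\<in>J. (\<Sum>j\<in>J. x j * a (j + del k) l) * z (l + (\<gamma> + del i)))"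
      by (simp add: KF[OF gd] X_def)
    also have "\<dots> = (\<Sum>j\<in>J. x j * (\<Sum>l\<in>J. a (j + del k) l * z (\<gamma> + del i + l)))"
      by (simp add: sum_distrib_left sum_distrib_right algebra_simps ac_simps) (subst sum.swap, simp)
    also have "\<dots> = (\<Sum>j\<in>J. x j * z (\<gamma> + del i + (j + del k)))"
      by (intro sum.cong refl) (simp add: A1[OF jdel gd])
    finally show ?thesis .
  qed
  have "X i (X k x) - X k (X i x) = 0"
  proof (rule ND)
    show "X i (X k x) - X k (X i x) \<in> VJ J" by (intro VJ_diff XV)
    fix \<gamma> assume g: "\<gamma> \<in> J"
    show "ip J G (X i (X k x) - X k (X i x)) (a \<gamma>) = 0"
      unfolding ip_diff_left E[OF g] by (simp add: ac_simps)
  qed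
  then show ?thesis by simp
qed


lemma linX: "lin (X i)" using opX by (simp add: opJ_def)

lemma decomp: "\<exists>K w. finite K \<and> a 0 = (\<Sum>u\<in>K. w u) \<and>
   (\<forall>u\<in>K. w u \<in> VJ J \<and> (\<forall>i\<in>UNIV. X i (w u) = scl (u i) (w u)))"
  by (rule JD[where S=UNIV and X=X, OF opX COMM]) (auto simp: aV)

end

locale momdec = momset z t J a for z :: "('r::finite \<Rightarrow> nat) \<Rightarrow> real" and t J a +
  fixes K :: "('r \<Rightarrow> real) set" and w :: "('r \<Rightarrow> real) \<Rightarrow> ('r \<Rightarrow> nat) \<Rightarrow> real"
  assumes finK: "finite K" and a0: "a 0 = (\<Sum>u\<in>K. w u)"
    and wV: "\<And>u. u \<in> K \<Longrightarrow> w u \<in> VJ J"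
    and wE: "\<And>u i. u \<in> K \<Longrightarrow> X i (w u) = scl (u i) (w u)"
begin

lemma EXP: "\<beta> \<in> mons t \<Longrightarrow> a \<beta> = (\<Sum>u\<in>K. scl (mev \<beta> u) (w u))"
proof -
  have "\<forall>\<beta>. mdeg \<beta> = n \<longrightarrow> n \<le> t \<longrightarrow> a \<beta> = (\<Sum>u\<in>K. scl (mev \<beta> u) (w u))" for n
  proof (induction n)
    case 0
    show ?case
    proof (intro allI impI)
      fix \<beta> :: "'r \<Rightarrow> nat" assume "mdeg \<beta> = 0"
      then have b0: "\<beta> = 0" by (simp add: mdeg_eq_0)
      show "a \<beta> = (\<Sum>u\<in>K. scl (mev \<beta> u) (w u))" by (simp only: b0 a0 mev_0 scl_0(3))
    qed
  next
    case (Suc n)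
    show ?case
    proof (intro allI impI)
      fix \<beta> :: "'r \<Rightarrow> nat" assume b: "mdeg \<beta> = Suc n" and n: "Suc n \<le> t"
      then have "mdeg \<beta> \<noteq> 0" by simp
      then obtain i where i: "\<beta> i > 0" by (auto simp: mdeg_eq_0 fun_eq_iff)
      define \<beta>' where "\<beta>' = \<beta> - del i"
      have bb: "\<beta> = \<beta>' + del i" using i by (auto simp: \<beta>'_def del_def fun_eq_iff)
      have "mdeg \<beta> = mdeg \<beta>' + 1" unfolding bb by (simp only: mdeg_add mdeg_del)
      then have mb: "mdeg \<beta>' = n" using b by simp
      then have b': "\<beta>' \<in> mons (t - 1)" using n by (simp add: mons_def)
      have "a \<beta> = X i (a \<beta>')" unfolding bb by (rule F4[OF b', symmetric])
      also have "a \<beta>' = (\<Sum>u\<in>K. scl (mev \<beta>' u) (w u))" using Suc.IH mb n by (metis Suc_leD)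
      also have "X i (\<Sum>u\<in>K. scl (mev \<beta>' u) (w u)) = (\<Sum>u\<in>K. scl (mev \<beta>' u) (scl (u i) (w u)))"
        unfolding lin_sum[OF linX] lin_scl[OF linX] by (intro sum.cong refl) (simp add: wE)
      also have "\<dots> = (\<Sum>u\<in>K. scl (mev \<beta> u) (w u))"
        unfolding bb by (intro sum.cong refl) (simp add: scl_scl mev_add mev_del)
      finally show "a \<beta> = (\<Sum>u\<in>K. scl (mev \<beta> u) (w u))" .
    qed
  qed
  then show "\<beta> \<in> mons t \<Longrightarrow> ?thesis" by (auto simp: mons_def)
qed

lemma ORTH: "u \<in> K \<Longrightarrow> u' \<in> K \<Longrightarrow> u \<noteq> u' \<Longrightarrow> ip J G (w u) (w u') = 0"
proof -
  assume u: "u \<in> K" and u': "u' \<in> K" and ne: "u \<noteq> u'"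
  then obtain i where "u i \<noteq> u' i" by (auto simp: fun_eq_iff)
  then show ?thesis by (rule orth[OF opX wV[OF u] wV[OF u'] wE[OF u] wE[OF u']])
qed

definition lam :: "('r \<Rightarrow> real) \<Rightarrow> real" where "lam u = ip J G (w u) (w u)"

lemma lam_nonneg: "u \<in> K \<Longrightarrow> 0 \<le> lam u" unfolding lam_def by (rule ip_nonneg[OF wV])

lemma ipw: "u' \<in> K \<Longrightarrow> ip J G (\<Sum>u\<in>K. scl (c u) (w u)) (w u') = c u' * lam u'"
proof -
  assume u': "u' \<in> K"
  have "ip J G (\<Sum>u\<in>K. scl (c u) (w u)) (w u') = (\<Sum>u\<in>K. if u = u' then c u * lam u else 0)"
    unfolding ip_sum_left ip_scl_left by (intro sum.cong refl) (auto simp: lam_def ORTH u')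
  also have "\<dots> = c u' * lam u'" using finK u' by simp
  finally show ?thesis .
qed

lemma Z2: assumes b: "\<beta> \<in> mons t" and g: "\<gamma> \<in> mons t"
  shows "z (\<beta> + \<gamma>) = (\<Sum>u\<in>K. lam u * mev (\<beta> + \<gamma>) u)"
proof -
  have "z (\<beta> + \<gamma>) = ip J G (a \<beta>) (a \<gamma>)"
    using A1[OF g b] KF[OF b, of "a \<gamma>"] by (simp add: ac_simps)
  also have "\<dots> = ip J G (a \<beta>) (\<Sum>u\<in>K. scl (mev \<gamma> u) (w u))" using EXP[OF g] by simp
  also have "\<dots> = (\<Sum>u\<in>K. mev \<gamma> u * ip J G (a \<beta>) (w u))" by (simp add: ip_sum_right ip_scl_right)
  also have "\<dots> = (\<Sum>u\<in>K. mev \<gamma> u * (mev \<beta> u * lam u))"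
    by (intro sum.cong refl) (simp add: EXP[OF b] ipw)
  also have "\<dots> = (\<Sum>u\<in>K. lam u * mev (\<beta> + \<gamma>) u)" by (simp add: mev_add ac_simps)
  finally show ?thesis .
qed

lemma ZREP: "mdeg \<alpha> \<le> 2 * t \<Longrightarrow> z \<alpha> = (\<Sum>u\<in>K. lam u * mev \<alpha> u)"
  using split_deg2[of \<alpha> t] Z2 by (auto simp: mons_def)

lemma LOC:
  fixes Gam :: real and mu :: "real^'r" and Lam :: "real^'r^'r" and k :: nat
  assumes kt: "t \<le> k"
    and psd: "\<And>v. 0 \<le> (\<Sum>\<beta>\<in>mons (k - 1). \<Sum>\<gamma>\<in>mons (k - 1). v \<beta> * loc_mat Gam mu Lam z \<beta> \<gamma> * v \<gamma>)"
    and u0: "u0 \<in> K" and lpos: "0 < lam u0"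
  shows "0 \<le> (\<Sum>\<alpha>\<in>mons 2. gpoly Gam mu Lam \<alpha> * mev \<alpha> u0)"
proof -
  define g where "g = gpoly Gam mu Lam"
  define gv where "gv = (\<lambda>u. \<Sum>\<alpha>\<in>mons 2. g \<alpha> * mev \<alpha> u)"
  define Q where "Q = w u0"
  define Qv where "Qv = (\<lambda>u. \<Sum>\<beta>\<in>J. Q \<beta> * mev \<beta> u)"
  have QV: "Q \<in> VJ J" unfolding Q_def by (rule wV[OF u0])
  have "mons (t - 1) \<subseteq> mons (k - 1)" using kt by (intro mons_mono) simp
  then have Jk: "J \<subseteq> mons (k - 1)" using Jsub by blast
  define S where "S = (\<Sum>\<beta>\<in>mons (k - 1). \<Sum>\<gamma>\<in>mons (k - 1). Q \<beta> * loc_mat Gam mu Lam z \<beta> \<gamma> * Q \<gamma>)"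
  have S0: "0 \<le> S" unfolding S_def by (rule psd)
  have Qz: "\<And>\<beta>. \<beta> \<notin> J \<Longrightarrow> Q \<beta> = 0" using QV by (simp add: VJ_def)
  have "S = (\<Sum>\<beta>\<in>J. \<Sum>\<gamma>\<in>mons (k - 1). Q \<beta> * loc_mat Gam mu Lam z \<beta> \<gamma> * Q \<gamma>)"
    unfolding S_def by (rule sum.mono_neutral_right) (use Jk in \<open>auto simp: finite_mons Qz\<close>)
  also have "\<dots> = (\<Sum>\<beta>\<in>J. \<Sum>\<gamma>\<in>J. Q \<beta> * loc_mat Gam mu Lam z \<beta> \<gamma> * Q \<gamma>)"
    by (intro sum.cong refl sum.mono_neutral_right) (use Jk in \<open>auto simp: finite_mons Qz\<close>)
  also have "\<dots> = (\<Sum>\<beta>\<in>J. \<Sum>\<gamma>\<in>J. Q \<beta> * (\<Sum>u\<in>K. lam u * gv u * mev \<beta> u * mev \<gamma> u) * Q \<gamma>)"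
  proof (intro sum.cong refl)
    fix \<beta> \<gamma> assume b: "\<beta> \<in> J" and c: "\<gamma> \<in> J"
    have "loc_mat Gam mu Lam z \<beta> \<gamma> = (\<Sum>\<alpha>\<in>mons 2. g \<alpha> * (\<Sum>u\<in>K. lam u * mev (\<alpha> + \<beta> + \<gamma>) u))"
    proof -
      have "\<And>\<alpha>. \<alpha> \<in> mons 2 \<Longrightarrow> z (\<lambda>i. \<alpha> i + \<beta> i + \<gamma> i) = (\<Sum>u\<in>K. lam u * mev (\<alpha> + \<beta> + \<gamma>) u)"
      proof -
        fix \<alpha> :: "'r \<Rightarrow> nat" assume "\<alpha> \<in> mons 2"
        moreover have "mdeg \<beta> \<le> t - 1" "mdeg \<gamma> \<le> t - 1" using b c Jsub by (auto simp: mons_def)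
        ultimately have "mdeg (\<alpha> + \<beta> + \<gamma>) \<le> 2 * t" using t1 by (simp add: mdeg_add mons_def)
        moreover have "(\<lambda>i. \<alpha> i + \<beta> i + \<gamma> i) = \<alpha> + \<beta> + \<gamma>" by (simp add: fun_eq_iff)
        ultimately show "z (\<lambda>i. \<alpha> i + \<beta> i + \<gamma> i) = (\<Sum>u\<in>K. lam u * mev (\<alpha> + \<beta> + \<gamma>) u)"
          using ZREP by simp
      qed
      then show ?thesis unfolding loc_mat_def g_def by (intro sum.cong refl) simp
    qed
    also have "\<dots> = (\<Sum>u\<in>K. lam u * gv u * mev \<beta> u * mev \<gamma> u)"
    proof -
      have "(\<Sum>\<alpha>\<in>mons 2. g \<alpha> * (\<Sum>u\<in>K. lam u * mev (\<alpha> + \<beta> + \<gamma>) u))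
          = (\<Sum>\<alpha>\<in>mons 2. \<Sum>u\<in>K. lam u * mev \<beta> u * mev \<gamma> u * (g \<alpha> * mev \<alpha> u))"
        by (intro sum.cong refl) (simp add: sum_distrib_left mev_add mult_ac)
      also have "\<dots> = (\<Sum>u\<in>K. \<Sum>\<alpha>\<in>mons 2. lam u * mev \<beta> u * mev \<gamma> u * (g \<alpha> * mev \<alpha> u))"
        by (rule sum.swap)
      also have "\<dots> = (\<Sum>u\<in>K. lam u * mev \<beta> u * mev \<gamma> u * gv u)"
        by (simp add: gv_def sum_distrib_left)
      finally show ?thesis by (simp add: mult_ac)
    qed
    finally show "Q \<beta> * loc_mat Gam mu Lam z \<beta> \<gamma> * Q \<gamma> = Q \<beta> * (\<Sum>u\<in>K. lam u * gv u * mev \<beta> u * mev \<gamma> u) * Q \<gamma>"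
      by simp
  qed
  also have "\<dots> = (\<Sum>u\<in>K. lam u * gv u * Qv u * Qv u)"
  proof -
    have "(\<Sum>\<beta>\<in>J. \<Sum>\<gamma>\<in>J. Q \<beta> * (\<Sum>u\<in>K. lam u * gv u * mev \<beta> u * mev \<gamma> u) * Q \<gamma>)
        = (\<Sum>\<beta>\<in>J. \<Sum>\<gamma>\<in>J. \<Sum>u\<in>K. (lam u * gv u) * (Q \<beta> * mev \<beta> u) * (Q \<gamma> * mev \<gamma> u))"
      by (intro sum.cong refl) (simp add: sum_distrib_left sum_distrib_right mult_ac)
    also have "\<dots> = (\<Sum>u\<in>K. (lam u * gv u) * (\<Sum>\<beta>\<in>J. Q \<beta> * mev \<beta> u) * (\<Sum>\<gamma>\<in>J. Q \<gamma> * mev \<gamma> u))"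
      by (rule triple)
    finally show ?thesis by (simp add: Qv_def)
  qed
  finally have SS: "S = (\<Sum>u\<in>K. lam u * gv u * Qv u * Qv u)" .
  have IPQ: "ip J G Q (w u) = lam u * Qv u" if u: "u \<in> K" for u
  proof -
    have "ip J G Q (w u) = ip J G (\<Sum>\<beta>\<in>J. scl (Q \<beta>) (a \<beta>)) (w u)" using expand[OF QV] by simp
    also have "\<dots> = (\<Sum>\<beta>\<in>J. Q \<beta> * ip J G (a \<beta>) (w u))" by (simp add: ip_sum_left ip_scl_left)
    also have "\<dots> = (\<Sum>\<beta>\<in>J. Q \<beta> * (mev \<beta> u * lam u))"
      by (intro sum.cong refl) (use Jt in \<open>auto simp: EXP ipw u\<close>)
    also have "\<dots> = lam u * Qv u" by (simp add: Qv_def sum_distrib_left ac_simps)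
    finally show ?thesis .
  qed
  have IPQ2: "ip J G Q (w u) = (if u = u0 then lam u0 else 0)" if u: "u \<in> K" for u
    using ORTH[OF u0 u] by (auto simp: Q_def lam_def)
  have "S = (\<Sum>u\<in>K. gv u * Qv u * (if u = u0 then lam u0 else 0))"
    unfolding SS
  proof (intro sum.cong refl)
    fix u assume u: "u \<in> K"
    have e: "lam u * Qv u = (if u = u0 then lam u0 else 0)" using IPQ[OF u] IPQ2[OF u] by simp
    have "lam u * gv u * Qv u * Qv u = gv u * Qv u * (lam u * Qv u)" by (simp add: mult_ac)
    then show "lam u * gv u * Qv u * Qv u = gv u * Qv u * (if u = u0 then lam u0 else 0)" by (simp only: e)
  qed
  also have "\<dots> = gv u0 * Qv u0 * lam u0" using finK u0 by (simp add: if_distrib cong: if_cong)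
  finally have S1: "S = gv u0 * Qv u0 * lam u0" .
  have "lam u0 * Qv u0 = lam u0" using IPQ[OF u0] IPQ2[OF u0] by simp
  then have "Qv u0 = 1" using lpos by simp
  then have "0 \<le> gv u0 * lam u0" using S0 S1 by simp
  then show ?thesis using lpos by (simp add: gv_def g_def zero_le_mult_iff)
qed

end


lemma quad_zero:
  fixes a b :: real
  assumes h: "\<And>s. 0 \<le> 2 * s * b + s^2 * a"
  shows "b = 0"
proof -
  have a: "0 \<le> a" using h[of 1] h[of "-1"] by simp
  define d where "d = a + 1"
  have d: "d > 0" using a by (simp add: d_def)
  define s where "s = - b / d"
  have sd: "s * d = - b" using d by (simp add: s_def)
  have "0 \<le> (2 * s * b + s^2 * a) * d^2" using h[of s] d by simp
  also have "(2 * s * b + s^2 * a) * d^2 = 2 * (s * d) * b * d + (s * d)^2 * a"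
    by (simp add: algebra_simps power2_eq_square)
  also have "\<dots> = - (b^2 * (a + 2))" unfolding sd by (simp add: d_def algebra_simps power2_eq_square)
  finally have "b^2 * (a + 2) \<le> 0" by simp
  moreover have "0 \<le> b^2 * (a + 2)" using a by simp
  ultimately have "b^2 * (a + 2) = 0" by simp
  then show ?thesis using a by simp
qed

lemma sum_ind: "finite I \<Longrightarrow> i0 \<in> I \<Longrightarrow> (\<Sum>i\<in>I. (if i = i0 then 1 else 0) * f i) = (f i0::real)"
proof -
  assume "finite I" "i0 \<in> I"
  have "(\<Sum>i\<in>I. (if i = i0 then 1 else 0) * f i) = (\<Sum>i\<in>I. if i = i0 then f i else 0)"
    by (intro sum.cong) auto
  then show ?thesis using \<open>finite I\<close> \<open>i0 \<in> I\<close> by simp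
qed

lemma psd_ker:
  assumes psd: "psd_on I M" and fI: "finite I"
    and q0: "(\<Sum>i\<in>I. \<Sum>j\<in>I. v i * M i j * v j) = 0" and i0: "i0 \<in> I"
  shows "(\<Sum>j\<in>I. M i0 j * v j) = 0"
proof -
  have sym: "\<And>i j. i \<in> I \<Longrightarrow> j \<in> I \<Longrightarrow> M i j = M j i" using psd by (auto simp: psd_on_def)
  define e where "e = (\<lambda>i. if i = i0 then 1 else (0::real))"
  define b where "b = (\<Sum>j\<in>I. M i0 j * v j)"
  have Q: "(\<Sum>i\<in>I. \<Sum>j\<in>I. (v i + s * e i) * M i j * (v j + s * e j)) = 2 * s * b + s^2 * M i0 i0" for s
  proof -
    have "(\<Sum>i\<in>I. \<Sum>j\<in>I. (v i + s * e i) * M i j * (v j + s * e j))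
        = (\<Sum>i\<in>I. \<Sum>j\<in>I. v i * M i j * v j) + s * (\<Sum>i\<in>I. \<Sum>j\<in>I. e i * M i j * v j)
          + s * (\<Sum>i\<in>I. \<Sum>j\<in>I. v i * M i j * e j) + s^2 * (\<Sum>i\<in>I. \<Sum>j\<in>I. e i * M i j * e j)"
      by (simp add: algebra_simps sum.distrib sum_distrib_left power2_eq_square)
    also have "(\<Sum>i\<in>I. \<Sum>j\<in>I. e i * M i j * v j) = (\<Sum>i\<in>I. e i * (\<Sum>j\<in>I. M i j * v j))"
      by (simp add: sum_distrib_left mult.assoc)
    also have "\<dots> = b" unfolding e_def b_def by (rule sum_ind[OF fI i0])
    also have "(\<Sum>i\<in>I. \<Sum>j\<in>I. v i * M i j * e j) = (\<Sum>i\<in>I. v i * M i i0)"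
    proof (intro sum.cong refl)
      fix i
      have "(\<Sum>j\<in>I. v i * M i j * e j) = (\<Sum>j\<in>I. e j * (v i * M i j))" by (simp add: mult_ac)
      also have "\<dots> = v i * M i i0" unfolding e_def by (rule sum_ind[OF fI i0])
      finally show "(\<Sum>j\<in>I. v i * M i j * e j) = v i * M i i0" .
    qed
    also have "\<dots> = b" unfolding b_def using i0 sym by (intro sum.cong refl) (simp add: mult.commute)
    also have "(\<Sum>i\<in>I. \<Sum>j\<in>I. e i * M i j * e j) = (\<Sum>i\<in>I. e i * (\<Sum>j\<in>I. e j * M i j))"
      by (simp add: sum_distrib_left mult_ac)
    also have "\<dots> = (\<Sum>i\<in>I. e i * M i i0)" unfolding e_def by (simp only: sum_ind[OF fI i0])
    also have "\<dots> = M i0 i0" unfolding e_def by (rule sum_ind[OF fI i0])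
    finally show ?thesis using q0 by simp
  qed
  have "\<And>s. 0 \<le> 2 * s * b + s^2 * M i0 i0"
  proof -
    fix s
    have "0 \<le> (\<Sum>i\<in>I. \<Sum>j\<in>I. (v i + s * e i) * M i j * (v j + s * e j))"
      using spec[OF conjunct2[OF psd[unfolded psd_on_def]], of "\<lambda>i. v i + s * e i"] by simp
    then show "0 \<le> 2 * s * b + s^2 * M i0 i0" using Q by simp
  qed
  then have "b = 0" by (rule quad_zero)
  then show ?thesis by (simp add: b_def)
qed

lemma psd_sub:
  fixes M :: "('r::finite \<Rightarrow> nat) \<Rightarrow> ('r \<Rightarrow> nat) \<Rightarrow> real" and k t :: nat
  assumes "psd_on (mons k) M" "t \<le> k"
  shows "psd_on (mons t) M"
  unfolding psd_on_def
proof (intro conjI ballI allI)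
  have sub: "mons t \<subseteq> mons k" using assms(2) by (rule mons_mono)
  fix i j :: "'r \<Rightarrow> nat" assume "i \<in> mons t" "j \<in> mons t"
  then show "M i j = M j i" using assms(1) sub by (auto simp: psd_on_def)
next
  have sub: "mons t \<subseteq> mons k" using assms(2) by (rule mons_mono)
  fix v :: "('r \<Rightarrow> nat) \<Rightarrow> real"
  define v' where "v' = (\<lambda>i. if i \<in> mons t then v i else 0)"
  have "0 \<le> (\<Sum>i\<in>mons k. \<Sum>j\<in>mons k. v' i * M i j * v' j)" using assms(1) by (auto simp: psd_on_def)
  also have "\<dots> = (\<Sum>i\<in>mons t. \<Sum>j\<in>mons k. v' i * M i j * v' j)"
    by (rule sum.mono_neutral_right) (auto simp: finite_mons sub v'_def)
  also have "\<dots> = (\<Sum>i\<in>mons t. \<Sum>j\<in>mons t. v' i * M i j * v' j)"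
    by (intro sum.cong refl sum.mono_neutral_right) (auto simp: finite_mons sub v'_def)
  also have "\<dots> = (\<Sum>i\<in>mons t. \<Sum>j\<in>mons t. v i * M i j * v j)"
    by (intro sum.cong refl) (auto simp: v'_def)
  finally show "0 \<le> (\<Sum>i\<in>mons t. \<Sum>j\<in>mons t. v i * M i j * v j)" .
qed

lemma rank_max:
  assumes fI: "finite I" and J: "J \<subseteq> I" "cols_indep I M J"
  shows "card J \<le> rank_on I M"
proof -
  have "finite {card J | J. J \<subseteq> I \<and> cols_indep I M J}"
    by (rule finite_subset[of _ "{..card I}"]) (auto intro: card_mono[OF fI])
  then show ?thesis unfolding rank_on_def using J by (intro Max_ge) auto
qed

lemma rank_attained:
  assumes fI: "finite I"
  shows "\<exists>J. J \<subseteq> I \<and> cols_indep I M J \<and> card J = rank_on I M"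
proof -
  let ?C = "{card J | J. J \<subseteq> I \<and> cols_indep I M J}"
  have fin: "finite ?C"
    by (rule finite_subset[of _ "{..card I}"]) (auto intro: card_mono[OF fI])
  have "card {} \<in> ?C" by (auto simp: cols_indep_def intro!: exI[of _ "{}"])
  then have "?C \<noteq> {}" by blast
  from Max_in[OF fin this] show ?thesis unfolding rank_on_def by auto
qed


lemma flat_setup:
  fixes z :: "('r::finite \<Rightarrow> nat) \<Rightarrow> real" and k t :: nat
  assumes psd: "psd_on (mons k) (moment_mat z)" and t1: "1 \<le> t" and tk: "t \<le> k"
    and rk: "rank_on (mons t) (moment_mat z) = rank_on (mons (t - 1)) (moment_mat z)"
  shows "\<exists>J a. momset z t J a"
proof -
  define M where "M = moment_mat z"
  have Mz: "\<And>\<beta> \<gamma>. M \<beta> \<gamma> = z (\<beta> + \<gamma>)" by (simp add: M_def moment_mat_def plus_fun_def)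
  have psdt: "psd_on (mons t) M" using psd_sub[OF psd tk] by (simp add: M_def)
  have sub: "mons (t - 1) \<subseteq> mons t" by (rule mons_mono) simp
  obtain J where J: "J \<subseteq> mons (t - 1)" "cols_indep (mons (t - 1)) M J" "card J = rank_on (mons (t - 1)) M"
    using rank_attained[OF finite_mons] by blast
  have indt: "cols_indep (mons t) M J" using J(2) sub unfolding cols_indep_def by blast
  have Jt: "J \<subseteq> mons t" using J(1) sub by blast
  have fJ: "finite J" using Jt finite_mons finite_subset by blast
  have col: "\<forall>\<alpha>\<in>mons t. \<exists>co. (\<forall>j. j \<notin> J \<longrightarrow> co j = 0) \<and> (\<alpha> \<in> J \<longrightarrow> co = (\<lambda>j. if j = \<alpha> then 1 else 0))
      \<and> (\<forall>\<rho>\<in>mons t. M \<rho> \<alpha> = (\<Sum>j\<in>J. co j * M \<rho> j))"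
  proof
    fix \<alpha> :: "'r \<Rightarrow> nat" assume \<alpha>: "\<alpha> \<in> mons t"
    show "\<exists>co. (\<forall>j. j \<notin> J \<longrightarrow> co j = 0) \<and> (\<alpha> \<in> J \<longrightarrow> co = (\<lambda>j. if j = \<alpha> then 1 else 0))
      \<and> (\<forall>\<rho>\<in>mons t. M \<rho> \<alpha> = (\<Sum>j\<in>J. co j * M \<rho> j))"
    proof (cases "\<alpha> \<in> J")
      case True
      show ?thesis
        by (rule exI[of _ "\<lambda>j. if j = \<alpha> then 1 else 0"]) (use True sum_ind[OF fJ True] in auto)
    next
      case False
      have "\<not> cols_indep (mons t) M (insert \<alpha> J)"
      proof
        assume "cols_indep (mons t) M (insert \<alpha> J)"
        then have "card (insert \<alpha> J) \<le> rank_on (mons t) M"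
          by (intro rank_max[OF finite_mons]) (use \<alpha> Jt in auto)
        then show False using False fJ J(3) rk by (simp add: M_def)
      qed
      then obtain c where c1: "\<forall>i\<in>mons t. (\<Sum>j\<in>insert \<alpha> J. c j * M i j) = 0"
        and c2: "\<exists>j\<in>insert \<alpha> J. c j \<noteq> 0" unfolding cols_indep_def by blast
      have c1': "\<And>i. i \<in> mons t \<Longrightarrow> c \<alpha> * M i \<alpha> + (\<Sum>j\<in>J. c j * M i j) = 0"
        using c1 fJ False by simp
      have ca: "c \<alpha> \<noteq> 0"
      proof
        assume c0: "c \<alpha> = 0"
        have "\<forall>i\<in>mons t. (\<Sum>j\<in>J. c j * M i j) = 0" using c1' c0 by simp
        then have "\<forall>j\<in>J. c j = 0" using indt unfolding cols_indep_def by blast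
        then show False using c2 c0 by auto
      qed
      define co where "co = (\<lambda>j. if j \<in> J then - c j / c \<alpha> else 0)"
      show ?thesis
      proof (intro exI[of _ co] conjI allI impI ballI)
        fix j :: "'r \<Rightarrow> nat" assume "j \<notin> J" then show "co j = 0" by (simp add: co_def)
      next
        assume "\<alpha> \<in> J" then show "co = (\<lambda>j. if j = \<alpha> then 1 else 0)" using False by simp
      next
        fix \<rho> :: "'r \<Rightarrow> nat" assume \<rho>: "\<rho> \<in> mons t"
        have "M \<rho> \<alpha> = - (\<Sum>j\<in>J. c j * M \<rho> j) / c \<alpha>"
        proof -
          have "c \<alpha> * M \<rho> \<alpha> = - (\<Sum>j\<in>J. c j * M \<rho> j)" using c1'[OF \<rho>] by (simp add: eq_neg_iff_add_eq_0)
          then show ?thesis using ca by (simp add: field_simps)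
        qed
        also have "\<dots> = (\<Sum>j\<in>J. co j * M \<rho> j)"
          by (simp add: co_def sum_divide_distrib sum_negf[symmetric])
        finally show "M \<rho> \<alpha> = (\<Sum>j\<in>J. co j * M \<rho> j)" .
      qed
    qed
  qed
  from bchoice[OF col] obtain co where co: "\<forall>\<alpha>\<in>mons t. (\<forall>j. j \<notin> J \<longrightarrow> co \<alpha> j = 0) \<and>
      (\<alpha> \<in> J \<longrightarrow> co \<alpha> = (\<lambda>j. if j = \<alpha> then 1 else 0)) \<and> (\<forall>\<rho>\<in>mons t. M \<rho> \<alpha> = (\<Sum>j\<in>J. co \<alpha> j * M \<rho> j))"
    by blast
  define a where "a = (\<lambda>\<alpha>. if \<alpha> \<in> mons t then co \<alpha> else (\<lambda>_. 0))"
  have "momset z t J a"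
  proof
    show "1 \<le> t" by (rule t1)
    show "J \<subseteq> mons (t - 1)" by (rule J(1))
    fix \<alpha> \<rho> :: "'r \<Rightarrow> nat" assume a: "\<alpha> \<in> mons t" and r: "\<rho> \<in> mons t"
    then show "z (\<rho> + \<alpha>) = (\<Sum>j\<in>J. a \<alpha> j * z (\<rho> + j))"
      using co by (auto simp: a_def Mz[symmetric])
  next
    fix \<alpha> :: "'r \<Rightarrow> nat" assume "\<alpha> \<in> J"
    then show "a \<alpha> = (\<lambda>j. if j = \<alpha> then 1 else 0)" using co Jt by (auto simp: a_def)
  next
    fix \<alpha> j :: "'r \<Rightarrow> nat" assume "j \<notin> J"
    then show "a \<alpha> j = 0" using co by (auto simp: a_def)
  next
    fix x :: "('r \<Rightarrow> nat) \<Rightarrow> real" assume xV: "x \<in> VJ J" and x0: "x \<noteq> 0"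
    have xz: "\<And>l. l \<notin> J \<Longrightarrow> x l = 0" using xV by (simp add: VJ_def)
    have eq: "ip J (\<lambda>j l. z (j + l)) x x = (\<Sum>i\<in>mons t. \<Sum>j\<in>mons t. x i * M i j * x j)"
    proof -
      have "ip J (\<lambda>j l. z (j + l)) x x = (\<Sum>i\<in>J. \<Sum>j\<in>mons t. x i * M i j * x j)"
        unfolding ip_def Mz[symmetric]
        by (intro sum.cong refl sum.mono_neutral_left) (use Jt xz in \<open>auto simp: finite_mons\<close>)
      also have "\<dots> = (\<Sum>i\<in>mons t. \<Sum>j\<in>mons t. x i * M i j * x j)"
        by (rule sum.mono_neutral_left) (use Jt xz in \<open>auto simp: finite_mons\<close>)
      finally show ?thesis .
    qed
    have ge: "0 \<le> (\<Sum>i\<in>mons t. \<Sum>j\<in>mons t. x i * M i j * x j)" using psdt by (simp add: psd_on_def)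
    show "0 < ip J (\<lambda>j l. z (j + l)) x x"
    proof (rule ccontr)
      assume "\<not> 0 < ip J (\<lambda>j l. z (j + l)) x x"
      then have q0: "(\<Sum>i\<in>mons t. \<Sum>j\<in>mons t. x i * M i j * x j) = 0" using eq ge by simp
      have "\<forall>i\<in>mons t. (\<Sum>j\<in>J. x j * M i j) = 0"
      proof
        fix i :: "'r \<Rightarrow> nat" assume i: "i \<in> mons t"
        have "(\<Sum>j\<in>mons t. M i j * x j) = 0" by (rule psd_ker[OF psdt finite_mons q0 i])
        moreover have "(\<Sum>j\<in>mons t. M i j * x j) = (\<Sum>j\<in>J. M i j * x j)"
          by (rule sum.mono_neutral_right) (use Jt xz in \<open>auto simp: finite_mons\<close>)
        moreover have "(\<Sum>j\<in>J. M i j * x j) = (\<Sum>j\<in>J. x j * M i j)" by (simp add: mult.commute)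
        ultimately show "(\<Sum>j\<in>J. x j * M i j) = 0" by simp
      qed
      then have "\<forall>j\<in>J. x j = 0" using indt unfolding cols_indep_def by blast
      then have "x = 0" using xz by (auto simp: fun_eq_iff)
      then show False using x0 by simp
    qed
  qed
  then show ?thesis by blast
qed



lemma vec_mev: "monom_eval \<alpha> (vec_lambda u) = mev \<alpha> u"
  by (simp add: monom_eval_mev)

lemma moment_nonneg:
  fixes zs :: "('r::finite \<Rightarrow> nat) \<Rightarrow> real" and Gam :: real and mu :: "real^'r" and Lam :: "real^'r^'r"
  assumes Sg: "Sg Gam mu Lam k zs" and t1: "1 \<le> t" and tk: "t \<le> k" and dt: "d \<le> 2 * t"
    and rk: "rank_on (mons t) (moment_mat zs) = rank_on (mons (t - 1)) (moment_mat zs)"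
    and p: "Pnonneg Gam mu Lam d p"
  shows "0 \<le> (\<Sum>\<alpha>\<in>mons d. p \<alpha> * zs \<alpha>)"
proof -
  have psdk: "psd_on (mons k) (moment_mat zs)" and psdl: "psd_on (mons (k - 1)) (loc_mat Gam mu Lam zs)"
    using Sg by (auto simp: Sg_def)
  obtain J a where ms: "momset zs t J a" using flat_setup[OF psdk t1 tk rk] by blast
  interpret momset zs t J a by (rule ms)
  obtain K w where fK: "finite K" and a0: "a 0 = (\<Sum>u\<in>K. w u)"
    and wp: "\<forall>u\<in>K. w u \<in> VJ J \<and> (\<forall>i\<in>UNIV. X i (w u) = scl (u i) (w u))"
    using decomp by blast
  interpret md: momdec zs t J a K w
    by unfold_locales (use fK a0 wp in auto)
  have locpsd: "\<And>v. 0 \<le> (\<Sum>\<beta>\<in>mons (k - 1). \<Sum>\<gamma>\<in>mons (k - 1). v \<beta> * loc_mat Gam mu Lam zs \<beta> \<gamma> * v \<gamma>)"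
    using psdl by (simp add: psd_on_def)
  have "(\<Sum>\<alpha>\<in>mons d. p \<alpha> * zs \<alpha>) = (\<Sum>\<alpha>\<in>mons d. p \<alpha> * (\<Sum>u\<in>K. md.lam u * mev \<alpha> u))"
    by (intro sum.cong refl) (use dt in \<open>auto simp: mons_def intro!: md.ZREP\<close>)
  also have "\<dots> = (\<Sum>u\<in>K. md.lam u * peval d p (vec_lambda u))"
    unfolding peval_def vec_mev by (simp add: sum_distrib_left mult_ac) (rule sum.swap)
  also have "\<dots> \<ge> 0"
  proof (rule sum_nonneg)
    fix u assume u: "u \<in> K"
    show "0 \<le> md.lam u * peval d p (vec_lambda u)"
    proof (cases "md.lam u = 0")
      case True then show ?thesis by simp
    next
      case False
      then have lp: "0 < md.lam u" using md.lam_nonneg[OF u] by simp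
      have "0 \<le> (\<Sum>\<alpha>\<in>mons 2. gpoly Gam mu Lam \<alpha> * mev \<alpha> u)" by (rule md.LOC[OF tk locpsd u lp])
      also have "\<dots> = peval 2 (gpoly Gam mu Lam) (vec_lambda u)" by (simp add: peval_def vec_mev)
      also have "\<dots> = gfun Gam mu Lam (vec_lambda u)" using gpoly_prop by blast
      finally have "vec_lambda u \<in> Uset Gam mu Lam" by (simp add: Uset_def)
      then have "0 \<le> peval d p (vec_lambda u)" using p by (simp add: Pnonneg_def)
      then show ?thesis using lp by simp
    qed
  qed
  finally show ?thesis .
qed

theorem corollary3p2:
  fixes d k :: nat
    and A :: "('r::finite \<Rightarrow> nat) \<Rightarrow> real^'n"
    and b :: "('r \<Rightarrow> nat) \<Rightarrow> real"
    and c :: "real^'n"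
    and X :: "(real^'n) set"
    and Gam :: real and mu :: "real^'r" and Lam :: "real^'r^'r"
    and xs :: "real^'n" and ys zs :: "('r \<Rightarrow> nat) \<Rightarrow> real"
  assumes "closed X" and "convex X"
    and "Gam > 0" and "pos_def_mat Lam"
    and "max ((d + 1) div 2) 1 \<le> k"
    and "SOS_optimizer k d A b c X Gam mu Lam xs"
    and "MOM_optimizer k d A b c X Gam mu Lam ys zs"
    and "f_sos k d A b c X Gam mu Lam = f_mom k d A b c X Gam mu Lam"
    and "\<exists>t. max ((d + 1) div 2) 1 \<le> t \<and> t \<le> k \<and>
           rank_on (mons t) (moment_mat zs) = rank_on (mons (t - 1)) (moment_mat zs)"
  shows "P_minimizer d A b c X Gam mu Lam xs \<and> c \<bullet> xs = f_min d A b c X Gam mu Lam"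
proof -
  note sosopt = assms(6) and momopt = assms(7) and feq = assms(8)
  obtain t where t: "max ((d + 1) div 2) 1 \<le> t" "t \<le> k"
    and rk: "rank_on (mons t) (moment_mat zs) = rank_on (mons (t - 1)) (moment_mat zs)"
    using assms(9) by blast
  have t1: "1 \<le> t" and dt: "d \<le> 2 * t" using t(1) by auto
  have k1: "1 \<le> k" and dk: "d \<le> 2 * k" using t by auto
  have xsX: "xs \<in> X" and QMxs: "QM Gam mu Lam k (affpoly d A b xs)"
    and sosmin: "\<And>x'. SOS_feas k d A b X Gam mu Lam x' \<Longrightarrow> c \<bullet> xs \<le> c \<bullet> x'"
    using sosopt by (auto simp: SOS_optimizer_def SOS_feas_def)
  have degaff: "\<And>x. deg_le d (affpoly d A b x)" by (simp add: deg_le_def affpoly_def)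
  have Pxs: "P_feas d A b X Gam mu Lam xs"
    unfolding P_feas_def Pnonneg_def
  proof (intro conjI ballI xsX degaff)
    fix \<xi> assume \<xi>: "\<xi> \<in> Uset Gam mu Lam"
    have "0 \<le> peval (2 * k) (affpoly d A b xs) \<xi>" using QM_prop[OF k1 QMxs \<xi>] by blast
    then show "0 \<le> peval d (affpoly d A b xs) \<xi>" using peval_cut[OF degaff dk] by simp
  qed
  have SOSxs: "SOS_feas k d A b X Gam mu Lam xs" using sosopt by (simp add: SOS_optimizer_def)
  have fsos: "f_sos k d A b c X Gam mu Lam = c \<bullet> xs"
    unfolding f_sos_def by (rule cInf_eq_minimum) (use SOSxs sosmin in auto)
  have MOMys: "MOM_feas k d A c X Gam mu Lam ys zs"
    and mommax: "\<And>y' z'. MOM_feas k d A c X Gam mu Lam y' z' \<Longrightarrow> mom_obj d b y' \<le> mom_obj d b ys"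
    using momopt by (auto simp: MOM_optimizer_def)
  have fmom: "f_mom k d A b c X Gam mu Lam = mom_obj d b ys"
  proof (unfold f_mom_def, rule cSup_eq_maximum)
    show "mom_obj d b ys \<in> (\<lambda>yz. mom_obj d b (fst yz)) ` {(y, z). MOM_feas k d A c X Gam mu Lam y z}"
      using MOMys by (intro image_eqI[of _ _ "(ys, zs)"]) auto
  qed (use mommax in auto)
  have cxs: "c \<bullet> xs = - (\<Sum>\<alpha>\<in>mons d. b \<alpha> * ys \<alpha>)"
    using feq fsos fmom by (simp add: mom_obj_def)
  have dual: "c - (\<Sum>\<alpha>\<in>mons d. ys \<alpha> *\<^sub>R A \<alpha>) \<in> dual_cone X" and yz: "ys = trunc d zs"
    and Sg: "Sg Gam mu Lam k zs"
    using MOMys by (auto simp: MOM_feas_def)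
  have main: "c \<bullet> xs \<le> c \<bullet> x'" if x': "P_feas d A b X Gam mu Lam x'" for x'
  proof -
    have x'X: "x' \<in> X" and pn: "Pnonneg Gam mu Lam d (affpoly d A b x')" using x' by (auto simp: P_feas_def)
    have "0 \<le> (c - (\<Sum>\<alpha>\<in>mons d. ys \<alpha> *\<^sub>R A \<alpha>)) \<bullet> x'" using dual x'X by (auto simp: dual_cone_def)
    then have h1: "(\<Sum>\<alpha>\<in>mons d. ys \<alpha> * (A \<alpha> \<bullet> x')) \<le> c \<bullet> x'"
      by (simp add: inner_diff_left inner_sum_left)
    have "0 \<le> (\<Sum>\<alpha>\<in>mons d. affpoly d A b x' \<alpha> * zs \<alpha>)"
      by (rule moment_nonneg[OF Sg t1 t(2) dt rk pn])
    also have "\<dots> = (\<Sum>\<alpha>\<in>mons d. ys \<alpha> * (A \<alpha> \<bullet> x') + b \<alpha> * ys \<alpha>)"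
      by (intro sum.cong refl) (simp add: affpoly_def yz trunc_def mons_def algebra_simps)
    finally have h2: "0 \<le> (\<Sum>\<alpha>\<in>mons d. ys \<alpha> * (A \<alpha> \<bullet> x')) + (\<Sum>\<alpha>\<in>mons d. b \<alpha> * ys \<alpha>)"
      by (simp add: sum.distrib)
    show ?thesis using h1 h2 cxs by linarith
  qed
  have Pmin: "P_minimizer d A b c X Gam mu Lam xs"
    unfolding P_minimizer_def using Pxs main by blast
  have "f_min d A b c X Gam mu Lam = c \<bullet> xs"
    unfolding f_min_def by (rule cInf_eq_minimum) (use Pxs main in auto)
  then show ?thesis using Pmin by simp
qed


end
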